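(* Consider a feedforward rectifier network with input dimension $n_0$ and hidden layers $l \in \{1,\dots,L\}$ of widths $n_1,\dots,n_L$, where layer $l$ has weight matrix ${\bm W}^l \in \mathbb{R}^{n_l \times n_{l-1}}$ and bias ${\bm b}^l$, and neuron $i$ of layer $l$ computes $h_i^l = \max\{0, {\bm W}_i^l {\bm h}^{l-1} + {\bm b}_i^l\}$. Suppose each layer has been pruned so that each entry of ${\bm W}^l$ independently remains (is nonzero) with probability $p_l$ (the layer density) and is set to zero with probability $1-p_l$. Let $R(l,d)$ denote the expected (over the sparsity patterns) maximum number of linear regions that can be defined by layers $l, l+1, \dots, L$ when the dimension of the input to layer $l$ is $d$, and let $P(k \mid R, C, S)$ denote the probability that a weight matrix with $R$ rows, $C$ columns and probability $S$ of each element being nonzero has rank $k$. Then \[ R(L,d) \le \sum_{k=0}^{n_L} P(k \mid R = n_L, C = n_{L-1}, S = p_L) \sum_{j=0}^{\min\{k,d\}} \binom{n_L}{j}, \] and for $1 \le l \le L-1$, \[ R(l,d) \le \sum_{k=0}^{n_l} P(k \mid R = n_l, C = n_{l-1}, S = p_l) \sum_{j=0}^{\min\{k,d\}} \binom{n_l}{j}\, R\big(l+1, \min\{n_l - j, d, k\}\big). \]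
   Context: A linear region of a ReLU network is a maximal full-dimensional connected set of inputs on which the configuration of active neurons (those with ${\bm W}_i^l {\bm h}^{l-1} + {\bm b}_i^l > 0$) and inactive neurons (those with ${\bm W}_i^l {\bm h}^{l-1} + {\bm b}_i^l < 0$) is constant, so that the network acts as an affine function there; regions lying on activation hyperplanes (where some preactivation is exactly zero throughout) are not counted. Here ${\bm h}^0$ is the network input, ${\bm h}^l$ is the output of layer $l$, and ${\bm W}_i^l$ is the $i$-th row of ${\bm W}^l$. Every sparsity pattern of a given number of nonzeros is regarded as equally probable (random pruning). *)

theory Defs
  imports "HOL-Analysis.Analysis"
begin

text \<open>Widths: n :: nat \<Rightarrow> nat, n 0 is the input dimension, n l the width of
  hidden layer l (1 \<le> l \<le> L).  Weights: W l i j is entry (i,j) of the n l \<times> n (l-1) matrix W^l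
  (0-based row/column indices); b l i is the i-th bias of layer l.  Vectors are modelled as
  functions nat \<Rightarrow> real; only the first coordinates matter.  The space R^d is the set of
  vectors vanishing from coordinate d on, with the (product = Euclidean) topology.\<close>

definition Rd :: "nat \<Rightarrow> (nat \<Rightarrow> real) set" where
  "Rd d = {x. \<forall>i\<ge>d. x i = 0}"

definition preact :: "(nat \<Rightarrow> nat) \<Rightarrow> (nat \<Rightarrow> nat \<Rightarrow> nat \<Rightarrow> real) \<Rightarrow> (nat \<Rightarrow> nat \<Rightarrow> real)
    \<Rightarrow> nat \<Rightarrow> (nat \<Rightarrow> real) \<Rightarrow> nat \<Rightarrow> real" where
  "preact n W b l h i = (\<Sum>j<n (l - 1). W l i j * h j) + b l i"

definition layer :: "(nat \<Rightarrow> nat) \<Rightarrow> (nat \<Rightarrow> nat \<Rightarrow> nat \<Rightarrow> real) \<Rightarrow> (nat \<Rightarrow> nat \<Rightarrow> real)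
    \<Rightarrow> nat \<Rightarrow> (nat \<Rightarrow> real) \<Rightarrow> (nat \<Rightarrow> real)" where
  "layer n W b l h = (\<lambda>i. if i < n l then max 0 (preact n W b l h i) else 0)"

fun outp :: "(nat \<Rightarrow> nat) \<Rightarrow> (nat \<Rightarrow> nat \<Rightarrow> nat \<Rightarrow> real) \<Rightarrow> (nat \<Rightarrow> nat \<Rightarrow> real)
    \<Rightarrow> nat \<Rightarrow> (nat \<Rightarrow> real) \<Rightarrow> nat \<Rightarrow> (nat \<Rightarrow> real)" where
  "outp n W b l0 h 0 = h"
| "outp n W b l0 h (Suc t) = layer n W b (l0 + t) (outp n W b l0 h t)"

definition inmap :: "(nat \<Rightarrow> nat) \<Rightarrow> nat \<Rightarrow> nat \<Rightarrow> (nat \<Rightarrow> nat \<Rightarrow> real) \<Rightarrow> (nat \<Rightarrow> real)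
    \<Rightarrow> (nat \<Rightarrow> real) \<Rightarrow> (nat \<Rightarrow> real)" where
  "inmap n l0 d A c x = (\<lambda>i. if i < n (l0 - 1) then (\<Sum>j<d. A i j * x j) + c i else 0)"

definition config_set :: "(nat \<Rightarrow> nat) \<Rightarrow> nat \<Rightarrow> (nat \<Rightarrow> nat \<Rightarrow> nat \<Rightarrow> real) \<Rightarrow> (nat \<Rightarrow> nat \<Rightarrow> real)
    \<Rightarrow> nat \<Rightarrow> nat \<Rightarrow> (nat \<Rightarrow> nat \<Rightarrow> real) \<Rightarrow> (nat \<Rightarrow> real) \<Rightarrow> (nat \<Rightarrow> nat \<Rightarrow> bool)
    \<Rightarrow> (nat \<Rightarrow> real) set" where
  "config_set n L W b l0 d A c \<sigma> =
     {x \<in> Rd d. \<forall>m\<in>{l0..L}. \<forall>i<n m.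
        (let z = preact n W b m (outp n W b l0 (inmap n l0 d A c x) (m - l0)) i
         in if \<sigma> m i then z > 0 else z < 0)}"

definition full_dim :: "nat \<Rightarrow> (nat \<Rightarrow> real) set \<Rightarrow> bool" where
  "full_dim d C \<longleftrightarrow> (\<exists>U. openin (top_of_set (Rd d)) U \<and> U \<noteq> {} \<and> U \<subseteq> C)"

definition lin_regions :: "(nat \<Rightarrow> nat) \<Rightarrow> nat \<Rightarrow> (nat \<Rightarrow> nat \<Rightarrow> nat \<Rightarrow> real) \<Rightarrow> (nat \<Rightarrow> nat \<Rightarrow> real)
    \<Rightarrow> nat \<Rightarrow> nat \<Rightarrow> (nat \<Rightarrow> nat \<Rightarrow> real) \<Rightarrow> (nat \<Rightarrow> real) \<Rightarrow> (nat \<Rightarrow> real) set set" where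
  "lin_regions n L W b l0 d A c =
     {C. \<exists>\<sigma>. C \<in> components (config_set n L W b l0 d A c \<sigma>) \<and> full_dim d C}"

text \<open>Sparsity patterns: pat m is the set of positions (i,j) of layer m that are kept (nonzero).\<close>
definition supported :: "(nat \<Rightarrow> nat) \<Rightarrow> nat \<Rightarrow> nat \<Rightarrow> (nat \<Rightarrow> (nat \<times> nat) set)
    \<Rightarrow> (nat \<Rightarrow> nat \<Rightarrow> nat \<Rightarrow> real) \<Rightarrow> bool" where
  "supported n L l0 pat W \<longleftrightarrow>
     (\<forall>m\<in>{l0..L}. \<forall>i<n m. \<forall>j<n (m - 1). W m i j \<noteq> 0 \<longleftrightarrow> (i, j) \<in> pat m)"

text \<open>Maximum number of linear regions defined by layers l0..L, for fixed sparsity patterns,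
  when the input of layer l0 has dimension d (ranges over an affine image of R^d).\<close>
definition max_regions :: "(nat \<Rightarrow> nat) \<Rightarrow> nat \<Rightarrow> (nat \<Rightarrow> (nat \<times> nat) set) \<Rightarrow> nat \<Rightarrow> nat \<Rightarrow> real" where
  "max_regions n L pat l0 d =
     Sup {real (card (lin_regions n L W b l0 d A c)) | W b A c. supported n L l0 pat W}"

definition box :: "nat \<Rightarrow> nat \<Rightarrow> (nat \<times> nat) set" where
  "box R C = {..<R} \<times> {..<C}"

definition pat_prob :: "nat \<Rightarrow> nat \<Rightarrow> real \<Rightarrow> (nat \<times> nat) set \<Rightarrow> real" where
  "pat_prob R C S P = S ^ card P * (1 - S) ^ (R * C - card P)"

definition pat_space :: "(nat \<Rightarrow> nat) \<Rightarrow> nat \<Rightarrow> nat \<Rightarrow> (nat \<Rightarrow> (nat \<times> nat) set) set" where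
  "pat_space n L l0 = {pat. \<forall>m. (m \<in> {l0..L} \<longrightarrow> pat m \<subseteq> box (n m) (n (m - 1)))
                               \<and> (m \<notin> {l0..L} \<longrightarrow> pat m = {})}"

definition Rexp :: "(nat \<Rightarrow> nat) \<Rightarrow> nat \<Rightarrow> (nat \<Rightarrow> real) \<Rightarrow> nat \<Rightarrow> nat \<Rightarrow> real" where
  "Rexp n L p l0 d =
     (\<Sum>pat\<in>pat_space n L l0.
        (\<Prod>m\<in>{l0..L}. pat_prob (n m) (n (m - 1)) (p m) (pat m)) * max_regions n L pat l0 d)"

definition indep_rows :: "(nat \<Rightarrow> nat \<Rightarrow> real) \<Rightarrow> nat \<Rightarrow> nat set \<Rightarrow> bool" where
  "indep_rows M C I \<longleftrightarrow> (\<forall>a. (\<forall>j<C. (\<Sum>i\<in>I. a i * M i j) = 0) \<longrightarrow> (\<forall>i\<in>I. a i = 0))"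

definition mat_rank :: "(nat \<Rightarrow> nat \<Rightarrow> real) \<Rightarrow> nat \<Rightarrow> nat \<Rightarrow> nat" where
  "mat_rank M R C = Max {card I | I. I \<subseteq> {..<R} \<and> indep_rows M C I}"

text \<open>Rank of a matrix with sparsity pattern P and generic (almost surely) nonzero values:
  the maximal rank of a real matrix whose nonzero entries are exactly P.\<close>
definition pattern_rank :: "nat \<Rightarrow> nat \<Rightarrow> (nat \<times> nat) set \<Rightarrow> nat" where
  "pattern_rank R C P =
     Max {mat_rank M R C | M. \<forall>i<R. \<forall>j<C. M i j \<noteq> 0 \<longleftrightarrow> (i, j) \<in> P}"

definition prob_rank :: "nat \<Rightarrow> nat \<Rightarrow> nat \<Rightarrow> real \<Rightarrow> real" where
  "prob_rank k R C S =
     (\<Sum>P\<in>{P. P \<subseteq> box R C \<and> pattern_rank R C P = k}. pat_prob R C S P)"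

end

theory Submission
  imports Defs
begin

definition comb :: "real \<Rightarrow> (nat \<Rightarrow> real) \<Rightarrow> (nat \<Rightarrow> real) \<Rightarrow> (nat \<Rightarrow> real)" where
  "comb s f g = (\<lambda>i. (1 - s) * f i + s * g i)"

lemma sum_comb:
  "(\<Sum>j\<in>J. (a j::real) * ((1 - s) * x j + s * y j)) = (1 - s) * (\<Sum>j\<in>J. a j * x j) + s * (\<Sum>j\<in>J. a j * y j)"
  unfolding sum_distrib_left sum.distrib[symmetric] by (rule sum.cong) (auto simp: algebra_simps)

lemma inmap_comb:
  "inmap n l0 d A c (comb s x y) = comb s (inmap n l0 d A c x) (inmap n l0 d A c y)"
  unfolding inmap_def comb_def sum_comb
  by (rule ext) (auto simp: algebra_simps)

lemma preact_comb:
  "preact n W b m (comb s x y) i = (1 - s) * preact n W b m x i + s * preact n W b m y i"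
  unfolding preact_def comb_def sum_comb
  by (auto simp: algebra_simps)

lemma max_comb:
  assumes "0 \<le> s" "s \<le> 1" "(u > 0 \<and> v > 0) \<or> (u < 0 \<and> v < 0)"
  shows "max 0 ((1 - s) * u + s * v) = (1 - s) * max 0 u + s * max 0 (v::real)"
  using assms
proof (elim disjE)
  assume h: "u > 0 \<and> v > 0"
  have "(1 - s) * u + s * v \<ge> 0" using h assms by (intro add_nonneg_nonneg mult_nonneg_nonneg) auto
  then show ?thesis using h by auto
next
  assume h: "u < 0 \<and> v < 0"
  have "(1 - s) * u + s * v \<le> 0" using h assms
    by (intro add_nonpos_nonpos mult_nonneg_nonpos) auto
  then show ?thesis using h by auto
qed

lemma outp_comb:
  assumes x: "x \<in> config_set n L W b l0 d A c \<sigma>" and y: "y \<in> config_set n L W b l0 d A c \<sigma>"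
    and s: "0 \<le> s" "s \<le> 1"
  shows "l0 + t \<le> Suc L \<Longrightarrow> outp n W b l0 (inmap n l0 d A c (comb s x y)) t
     = comb s (outp n W b l0 (inmap n l0 d A c x) t) (outp n W b l0 (inmap n l0 d A c y) t)"
proof (induction t)
  case 0
  then show ?case by (simp add: inmap_comb)
next
  case (Suc t)
  let ?hx = "outp n W b l0 (inmap n l0 d A c x) t"
  let ?hy = "outp n W b l0 (inmap n l0 d A c y) t"
  have IH: "outp n W b l0 (inmap n l0 d A c (comb s x y)) t = comb s ?hx ?hy"
    using Suc by auto
  have m: "l0 + t \<in> {l0..L}" using Suc.prems by auto
  have sg: "(preact n W b (l0 + t) ?hx i > 0 \<and> preact n W b (l0 + t) ?hy i > 0) \<or>
            (preact n W b (l0 + t) ?hx i < 0 \<and> preact n W b (l0 + t) ?hy i < 0)"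
    if "i < n (l0 + t)" for i
  proof -
    have "(let z = preact n W b (l0+t) ?hx i in if \<sigma> (l0+t) i then z > 0 else z < 0)"
      using x m that unfolding config_set_def by fastforce
    moreover have "(let z = preact n W b (l0+t) ?hy i in if \<sigma> (l0+t) i then z > 0 else z < 0)"
      using y m that unfolding config_set_def by fastforce
    ultimately show ?thesis by (auto simp: Let_def split: if_splits)
  qed
  show ?case
    unfolding outp.simps IH
    by (rule ext) (auto simp: layer_def comb_def preact_comb[unfolded comb_def] max_comb[OF s sg])
qed

lemma comb_pos:
  assumes "0 \<le> s" "s \<le> 1" "(u::real) > 0" "v > 0"
  shows "(1 - s) * u + s * v > 0"
proof (cases "s = 0")
  case False
  then have "s * v > 0" using assms by auto
  moreover have "(1 - s) * u \<ge> 0" using assms by auto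
  ultimately show ?thesis by linarith
qed (use assms in auto)

lemma comb_neg:
  assumes "0 \<le> s" "s \<le> 1" "(u::real) < 0" "v < 0"
  shows "(1 - s) * u + s * v < 0"
  using comb_pos[OF assms(1,2), of "-u" "-v"] assms by (simp add: algebra_simps)

lemma config_convex:
  assumes x: "x \<in> config_set n L W b l0 d A c \<sigma>" and y: "y \<in> config_set n L W b l0 d A c \<sigma>"
    and s: "0 \<le> s" "s \<le> 1"
  shows "comb s x y \<in> config_set n L W b l0 d A c \<sigma>"
proof -
  have "comb s x y \<in> Rd d" using x y unfolding config_set_def Rd_def comb_def by auto
  moreover have "(let z = preact n W b m (outp n W b l0 (inmap n l0 d A c (comb s x y)) (m - l0)) i
         in if \<sigma> m i then z > 0 else z < 0)" if m: "m \<in> {l0..L}" and i: "i < n m" for m i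
  proof -
    have e: "outp n W b l0 (inmap n l0 d A c (comb s x y)) (m - l0)
     = comb s (outp n W b l0 (inmap n l0 d A c x) (m - l0)) (outp n W b l0 (inmap n l0 d A c y) (m - l0))"
      using outp_comb[OF x y s] m by auto
    have hx: "(let z = preact n W b m (outp n W b l0 (inmap n l0 d A c x) (m - l0)) i
         in if \<sigma> m i then z > 0 else z < 0)" using x m i unfolding config_set_def by blast
    have hy: "(let z = preact n W b m (outp n W b l0 (inmap n l0 d A c y) (m - l0)) i
         in if \<sigma> m i then z > 0 else z < 0)" using y m i unfolding config_set_def by blast
    show ?thesis unfolding e preact_comb using hx hy s
      by (auto simp: Let_def comb_pos comb_neg split: if_splits)
  qed
  ultimately show ?thesis unfolding config_set_def by blast
qed

lemma config_connected: "connected (config_set n L W b l0 d A c \<sigma>)"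
proof -
  let ?S = "config_set n L W b l0 d A c \<sigma>"
  have "path_connected ?S"
    unfolding path_connected_def
  proof (intro ballI)
    fix x y assume x: "x \<in> ?S" and y: "y \<in> ?S"
    define g where "g = (\<lambda>s. comb s x y)"
    have "continuous_on {0..1} g"
      unfolding g_def comb_def
      by (intro continuous_on_coordinatewise_then_product continuous_intros)
    moreover have "path_image g \<subseteq> ?S"
      unfolding path_image_def g_def using config_convex[OF x y] by auto
    moreover have "pathstart g = x" "pathfinish g = y"
      unfolding pathstart_def pathfinish_def g_def comb_def by auto
    ultimately show "\<exists>g. path g \<and> path_image g \<subseteq> ?S \<and> pathstart g = x \<and> pathfinish g = y"
      unfolding path_def by blast
  qed
  then show ?thesis by (rule path_connected_imp_connected)
qed

lemma cont_inmap: "continuous_on UNIV (\<lambda>x. inmap n l0 d A c x i)"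
  unfolding inmap_def by (cases "i < n (l0 - 1)") (auto intro!: continuous_intros)

lemma cont_outp: "continuous_on UNIV (\<lambda>x. outp n W b l0 (inmap n l0 d A c x) t i)"
proof (induction t arbitrary: i)
  case 0
  then show ?case by (simp add: cont_inmap)
next
  case (Suc t)
  show ?case unfolding outp.simps layer_def preact_def
    by (cases "i < n (l0 + t)") (auto intro!: continuous_intros Suc)
qed

lemma cont_preact: "continuous_on UNIV (\<lambda>x. preact n W b m (outp n W b l0 (inmap n l0 d A c x) t) i)"
  unfolding preact_def by (auto intro!: continuous_intros cont_outp)

lemma config_open: "openin (top_of_set (Rd d)) (config_set n L W b l0 d A c \<sigma>)"
proof -
  let ?z = "\<lambda>m i x. preact n W b m (outp n W b l0 (inmap n l0 d A c x) (m - l0)) i"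
  define T where "T = (\<Inter>m\<in>{l0..L}. \<Inter>i\<in>{..<n m}. {x. if \<sigma> m i then 0 < ?z m i x else ?z m i x < 0})"
  have "open T" unfolding T_def
  proof (intro open_INT ballI finite_atLeastAtMost finite_lessThan)
    fix m i
    show "open {x. if \<sigma> m i then 0 < ?z m i x else ?z m i x < 0}"
      by (cases "\<sigma> m i") (auto intro!: open_Collect_less cont_preact continuous_intros)
  qed
  moreover have "config_set n L W b l0 d A c \<sigma> = Rd d \<inter> T"
    unfolding config_set_def T_def by (auto simp: Let_def)
  ultimately show ?thesis by auto
qed

definition Norm :: "(nat \<Rightarrow> nat) \<Rightarrow> nat \<Rightarrow> nat \<Rightarrow> (nat \<Rightarrow> nat \<Rightarrow> bool) set" where
  "Norm n L l0 = {\<tau>. \<forall>m i. \<tau> m i \<longrightarrow> m \<in> {l0..L} \<and> i < n m}"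

definition NE where
  "NE n L W b l0 d A c = {\<tau> \<in> Norm n L l0. config_set n L W b l0 d A c \<tau> \<noteq> {}}"

lemma config_norm:
  "config_set n L W b l0 d A c \<sigma> = config_set n L W b l0 d A c (\<lambda>m i. m \<in> {l0..L} \<and> i < n m \<and> \<sigma> m i)"
  unfolding config_set_def by (auto simp: Let_def)

lemma finite_Norm: "finite (Norm n L l0)"
proof -
  have "Norm n L l0 \<subseteq> (\<lambda>T. \<lambda>m i. (m, i) \<in> T) ` Pow (SIGMA m:{l0..L}. {..<n m})"
  proof
    fix \<tau> assume "\<tau> \<in> Norm n L l0"
    then have "\<tau> = (\<lambda>m i. (m, i) \<in> {(m, i). \<tau> m i})" 
      and "{(m, i). \<tau> m i} \<in> Pow (SIGMA m:{l0..L}. {..<n m})"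
      unfolding Norm_def by auto
    then show "\<tau> \<in> (\<lambda>T. \<lambda>m i. (m, i) \<in> T) ` Pow (SIGMA m:{l0..L}. {..<n m})" by blast
  qed
  moreover have "finite (Pow (SIGMA m:{l0..L}. {..<n m}))" by auto
  ultimately show ?thesis using finite_surj by blast
qed

lemma finite_NE: "finite (NE n L W b l0 d A c)"
  unfolding NE_def using finite_Norm by auto

lemma lin_regions_eq:
  "lin_regions n L W b l0 d A c = config_set n L W b l0 d A c ` NE n L W b l0 d A c"
proof (intro equalityI subsetI)
  fix C assume "C \<in> lin_regions n L W b l0 d A c"
  then obtain \<sigma> where C: "C \<in> components (config_set n L W b l0 d A c \<sigma>)"
    unfolding lin_regions_def by auto
  let ?\<tau> = "\<lambda>m i. m \<in> {l0..L} \<and> i < n m \<and> \<sigma> m i"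
  have ne: "config_set n L W b l0 d A c \<sigma> \<noteq> {}" using C by auto
  then have "components (config_set n L W b l0 d A c \<sigma>) = {config_set n L W b l0 d A c \<sigma>}"
    by (simp add: components_eq_sing_iff config_connected)
  then have "C = config_set n L W b l0 d A c \<sigma>" using C by simp
  then have "C = config_set n L W b l0 d A c ?\<tau>" by (simp only: config_norm[symmetric])
  moreover have "?\<tau> \<in> NE n L W b l0 d A c"
    unfolding NE_def Norm_def using ne config_norm[of n L W b l0 d A c \<sigma>] by auto
  ultimately show "C \<in> config_set n L W b l0 d A c ` NE n L W b l0 d A c" by blast
next
  fix C assume "C \<in> config_set n L W b l0 d A c ` NE n L W b l0 d A c"
  then obtain \<tau> where t: "\<tau> \<in> NE n L W b l0 d A c" and C: "C = config_set n L W b l0 d A c \<tau>"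
    by auto
  have ne: "C \<noteq> {}" using t C unfolding NE_def by auto
  have "components C = {C}" using ne C by (simp add: components_eq_sing_iff config_connected)
  moreover have "full_dim d C" unfolding full_dim_def using C ne config_open[of d n L W b l0 A c \<tau>] by blast
  ultimately show "C \<in> lin_regions n L W b l0 d A c" unfolding lin_regions_def using C by auto
qed

lemma inj_config: "inj_on (config_set n L W b l0 d A c) (NE n L W b l0 d A c)"
proof (rule inj_onI)
  fix \<tau>1 \<tau>2 assume t1: "\<tau>1 \<in> NE n L W b l0 d A c" and t2: "\<tau>2 \<in> NE n L W b l0 d A c"
    and eq: "config_set n L W b l0 d A c \<tau>1 = config_set n L W b l0 d A c \<tau>2"
  obtain x where x: "x \<in> config_set n L W b l0 d A c \<tau>1" using t1 unfolding NE_def by auto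
  then have x2: "x \<in> config_set n L W b l0 d A c \<tau>2" using eq by simp
  show "\<tau>1 = \<tau>2"
  proof (rule ext, rule ext)
    fix m i
    show "\<tau>1 m i = \<tau>2 m i"
    proof (cases "m \<in> {l0..L} \<and> i < n m")
      case True
      then have "(let z = preact n W b m (outp n W b l0 (inmap n l0 d A c x) (m - l0)) i
         in if \<tau>1 m i then z > 0 else z < 0)" "(let z = preact n W b m (outp n W b l0 (inmap n l0 d A c x) (m - l0)) i
         in if \<tau>2 m i then z > 0 else z < 0)"
        using x x2 unfolding config_set_def by blast+
      then show ?thesis by (auto simp: Let_def split: if_splits)
    next
      case False
      then show ?thesis using t1 t2 unfolding NE_def Norm_def by auto
    qed
  qed
qed

lemma card_lin_regions: "card (lin_regions n L W b l0 d A c) = card (NE n L W b l0 d A c)"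
  unfolding lin_regions_eq using inj_config card_image by blast

lemma card_NE_le: "card (NE n L W b l0 d A c) \<le> card (Norm n L l0)"
  unfolding NE_def using finite_Norm by (intro card_mono) auto

definition shatters :: "'a set set \<Rightarrow> 'a set \<Rightarrow> bool" where
  "shatters F S \<longleftrightarrow> (\<forall>T\<subseteq>S. \<exists>B\<in>F. B \<inter> S = T)"

lemma pajor:
  assumes "finite X"
  shows "F \<subseteq> Pow X \<Longrightarrow> card F \<le> card {S. S \<subseteq> X \<and> shatters F S}"
  using assms
proof (induction X arbitrary: F rule: finite_induct)
  case empty
  then have "F \<subseteq> {{}}" by auto
  then have "card F \<le> 1" using card_mono[of "{{}}" F] by auto
  moreover have "F \<noteq> {} \<Longrightarrow> {S. S \<subseteq> {} \<and> shatters F S} = {{}}"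
    unfolding shatters_def by auto
  ultimately show ?case by (cases "F = {}") auto
next
  case (insert x X)
  define F0 where "F0 = {B\<in>F. x \<notin> B}"
  define F1 where "F1 = (\<lambda>B. B - {x}) ` {B\<in>F. x \<in> B}"
  have finF: "finite F" using insert(1,4) by (meson finite_Pow_iff finite_insert rev_finite_subset)
  have F0X: "F0 \<subseteq> Pow X" and F1X: "F1 \<subseteq> Pow X" using insert(4) unfolding F0_def F1_def by auto
  have inj1: "inj_on (\<lambda>B. B - {x}) {B\<in>F. x \<in> B}" by (rule inj_onI) blast
  have "card F = card F0 + card {B\<in>F. x \<in> B}"
  proof -
    have "F = F0 \<union> {B\<in>F. x \<in> B}" "F0 \<inter> {B\<in>F. x \<in> B} = {}" unfolding F0_def by auto
    then show ?thesis using finF card_Un_disjoint unfolding F0_def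
      by (metis (no_types, lifting) finite_Un)
  qed
  also have "card {B\<in>F. x \<in> B} = card F1" unfolding F1_def using card_image[OF inj1] by simp
  also have "card F0 + card F1 = card (F0 \<union> F1) + card (F0 \<inter> F1)"
    using card_Un_Int[of F0 F1] finF unfolding F0_def F1_def by auto
  also have "card (F0 \<union> F1) \<le> card {S. S \<subseteq> X \<and> shatters (F0 \<union> F1) S}"
    using insert.IH F0X F1X by auto
  also have "card (F0 \<inter> F1) \<le> card {S. S \<subseteq> X \<and> shatters (F0 \<inter> F1) S}"
    by (rule insert.IH) (use F0X in auto)
  also have "card {S. S \<subseteq> X \<and> shatters (F0 \<union> F1) S} + card {S. S \<subseteq> X \<and> shatters (F0 \<inter> F1) S}
     \<le> card {S. S \<subseteq> insert x X \<and> shatters F S}"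
  proof -
    let ?A = "{S. S \<subseteq> X \<and> shatters (F0 \<union> F1) S}"
    let ?B = "{S. S \<subseteq> X \<and> shatters (F0 \<inter> F1) S}"
    have A: "?A \<subseteq> {S. S \<subseteq> insert x X \<and> shatters F S}"
    proof (intro subsetI)
      fix S assume S: "S \<in> ?A"
      then have S1: "S \<subseteq> insert x X" by auto
      have "shatters F S" unfolding shatters_def
      proof (intro allI impI)
        fix T assume "T \<subseteq> S"
        then obtain B where B: "B \<in> F0 \<union> F1" "B \<inter> S = T" using S unfolding shatters_def by blast
        show "\<exists>B\<in>F. B \<inter> S = T"
        proof (cases "B \<in> F0")
          case True then show ?thesis using B unfolding F0_def by auto
        next
          case False
          then obtain B' where "B' \<in> F" "B = B' - {x}" using B unfolding F1_def by auto
          moreover have "x \<notin> S" using S insert(2) by auto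
          ultimately show ?thesis using B by blast
        qed
      qed
      then show "S \<in> {S. S \<subseteq> insert x X \<and> shatters F S}" using S1 by blast
    qed
    have B: "insert x ` ?B \<subseteq> {S. S \<subseteq> insert x X \<and> shatters F S}"
    proof (intro subsetI)
      fix S' assume "S' \<in> insert x ` ?B"
      then obtain S where S: "S \<subseteq> X" "shatters (F0 \<inter> F1) S" and S': "S' = insert x S" by auto
      have xS: "x \<notin> S" using S insert(2) by auto
      have "shatters F (insert x S)" unfolding shatters_def
      proof (intro allI impI)
        fix T assume T: "T \<subseteq> insert x S"
        then obtain B where B: "B \<in> F0 \<inter> F1" "B \<inter> S = T - {x}" using S unfolding shatters_def
          by (metis Diff_subset_conv insert_is_Un)
        have BF: "B \<in> F" "x \<notin> B" using B unfolding F0_def by auto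
        obtain B' where B': "B' \<in> F" "x \<in> B'" "B = B' - {x}" using B unfolding F1_def by auto
        have iB: "insert x B \<in> F" using B' by (metis insert_Diff)
        show "\<exists>B\<in>F. B \<inter> insert x S = T"
        proof (cases "x \<in> T")
          case True
          then show ?thesis using iB B(2) by (intro bexI[of _ "insert x B"]) auto
        next
          case False
          then show ?thesis using BF B(2) by (intro bexI[of _ B]) auto
        qed
      qed
      then show "S' \<in> {S. S \<subseteq> insert x X \<and> shatters F S}" using S S' by auto
    qed
    have disj: "?A \<inter> insert x ` ?B = {}" using insert(2) by auto
    have injx: "inj_on (insert x) ?B"
    proof (rule inj_onI)
      fix a c assume "a \<in> ?B" "c \<in> ?B" "insert x a = insert x c"
      moreover have "x \<notin> a" "x \<notin> c" using calculation insert(2) by auto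
      ultimately have "insert x a - {x} = insert x c - {x}" "insert x a - {x} = a" "insert x c - {x} = c"
        by auto
      then show "a = c" by simp
    qed
    have finA: "finite ?A" "finite ?B" using insert(1) by auto
    have "card ?A + card ?B = card (?A \<union> insert x ` ?B)"
      using card_Un_disjoint[OF finA(1) _ disj] finA card_image[OF injx] by auto
    also have "\<dots> \<le> card {S. S \<subseteq> insert x X \<and> shatters F S}"
      using A B insert(1) by (intro card_mono) auto
    finally show ?thesis .
  qed
  finally show ?case by simp
qed

lemma card_small_subsets:
  "card {S. S \<subseteq> {..<(N::nat)} \<and> card S \<le> R} = (\<Sum>j = 0..R. N choose j)"
proof -
  have e: "{S. S \<subseteq> {..<N} \<and> card S \<le> R} = (\<Union>j\<in>{0..R}. {S. S \<subseteq> {..<N} \<and> card S = j})" by auto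
  show ?thesis unfolding e
    by (subst card_UN_disjoint) (auto simp: n_subsets)
qed

lemma dep_lemma:
  fixes v :: "nat \<Rightarrow> nat \<Rightarrow> real"
  shows "finite S \<Longrightarrow> card S > d \<Longrightarrow> \<exists>lm. (\<forall>t<d. (\<Sum>i\<in>S. lm i * v i t) = 0) \<and> (\<exists>i\<in>S. lm i \<noteq> 0)"
proof (induction d arbitrary: S v)
  case 0
  then obtain i where "i \<in> S" by fastforce
  then show ?case by (intro exI[of _ "\<lambda>_. 1"]) auto
next
  case (Suc d)
  show ?case
  proof (cases "\<forall>i\<in>S. v i d = 0")
    case True
    obtain lm where l: "\<forall>t<d. (\<Sum>i\<in>S. lm i * v i t) = 0" "\<exists>i\<in>S. lm i \<noteq> 0"
      using Suc.IH[of S v] Suc.prems by auto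
    have "\<forall>t<Suc d. (\<Sum>i\<in>S. lm i * v i t) = 0"
      using l(1) True by (auto simp: less_Suc_eq)
    then show ?thesis using l(2) by blast
  next
    case False
    then obtain i0 where i0: "i0 \<in> S" "v i0 d \<noteq> 0" by auto
    define S' where "S' = S - {i0}"
    define v' where "v' = (\<lambda>i t. v i t - (v i d / v i0 d) * v i0 t)"
    have finS': "finite S'" "card S' > d" using Suc.prems i0 unfolding S'_def by auto
    obtain \<mu> where mu: "\<forall>t<d. (\<Sum>i\<in>S'. \<mu> i * v' i t) = 0" "\<exists>i\<in>S'. \<mu> i \<noteq> 0"
      using Suc.IH[OF finS'] by blast
    define K where "K = (\<Sum>i\<in>S'. \<mu> i * v i d / v i0 d)"
    define lm where "lm = \<mu>(i0 := - K)"
    have S: "S = insert i0 S'" "i0 \<notin> S'" using i0 unfolding S'_def by auto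
    have sumS: "(\<Sum>i\<in>S. lm i * v i t) = - K * v i0 t + (\<Sum>i\<in>S'. \<mu> i * v i t)" for t
    proof -
      have "(\<Sum>i\<in>S'. lm i * v i t) = (\<Sum>i\<in>S'. \<mu> i * v i t)"
        using S(2) unfolding lm_def by (intro sum.cong) auto
      then show ?thesis using S finS' unfolding lm_def by (simp add: sum.insert)
    qed
    have decomp: "(\<Sum>i\<in>S'. \<mu> i * v i t) = (\<Sum>i\<in>S'. \<mu> i * v' i t) + K * v i0 t" for t
    proof -
      have "(\<Sum>i\<in>S'. \<mu> i * v i t) = (\<Sum>i\<in>S'. \<mu> i * v' i t + (\<mu> i * v i d / v i0 d) * v i0 t)"
        unfolding v'_def by (intro sum.cong) (auto simp: algebra_simps)
      also have "\<dots> = (\<Sum>i\<in>S'. \<mu> i * v' i t) + K * v i0 t"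
        unfolding K_def by (simp add: sum.distrib sum_distrib_right)
      finally show ?thesis .
    qed
    have v'd: "v' i d = 0" for i unfolding v'_def using i0 by auto
    have "\<forall>t<Suc d. (\<Sum>i\<in>S. lm i * v i t) = 0"
    proof (intro allI impI)
      fix t assume "t < Suc d"
      then have "t < d \<or> t = d" by auto
      then show "(\<Sum>i\<in>S. lm i * v i t) = 0"
      proof
        assume "t < d" then show ?thesis using sumS decomp mu(1) by simp
      next
        assume "t = d" then show ?thesis using sumS decomp v'd by simp
      qed
    qed
    moreover have "\<exists>i\<in>S. lm i \<noteq> 0" using mu(2) S unfolding lm_def by auto
    ultimately show ?thesis by blast
  qed
qed

lemma greedy:
  fixes h :: "nat \<Rightarrow> real" and js :: "'a \<Rightarrow> nat"
  assumes fin: "finite F"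
    and cj: "\<And>j. card {\<sigma>\<in>F. js \<sigma> = j} \<le> bb j"
    and tot: "card F \<le> (\<Sum>j = 0..R. bb j)"
    and mono: "\<And>i j. i \<le> j \<Longrightarrow> h j \<le> h i"
    and hR: "h R \<ge> 0"
  shows "(\<Sum>\<sigma>\<in>F. h (js \<sigma>)) \<le> (\<Sum>j = 0..R. real (bb j) * h j)"
proof -
  define F1 where "F1 = {\<sigma>\<in>F. js \<sigma> \<le> R}"
  define F2 where "F2 = {\<sigma>\<in>F. \<not> js \<sigma> \<le> R}"
  define c where "c = (\<lambda>j. card {\<sigma>\<in>F. js \<sigma> = j})"
  have fin12: "finite F1" "finite F2" using fin unfolding F1_def F2_def by auto
  have split: "(\<Sum>\<sigma>\<in>F. h (js \<sigma>)) = (\<Sum>\<sigma>\<in>F1. h (js \<sigma>)) + (\<Sum>\<sigma>\<in>F2. h (js \<sigma>))"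
  proof -
    have e: "F = F1 \<union> F2" "F1 \<inter> F2 = {}" unfolding F1_def F2_def by auto
    show ?thesis by (subst e(1)) (rule sum.union_disjoint[OF fin12 e(2)])
  qed
  have s1: "(\<Sum>\<sigma>\<in>F1. h (js \<sigma>)) = (\<Sum>j = 0..R. real (c j) * h j)"
  proof -
    have "(\<Sum>\<sigma>\<in>F1. h (js \<sigma>)) = (\<Sum>j = 0..R. \<Sum>\<sigma>\<in>{\<sigma>\<in>F1. js \<sigma> = j}. h (js \<sigma>))"
      using fin12 by (intro sum.group[symmetric]) (auto simp: F1_def)
    also have "\<dots> = (\<Sum>j = 0..R. real (c j) * h j)"
    proof (intro sum.cong refl)
      fix j assume "j \<in> {0..R}"
      then have "{\<sigma>\<in>F1. js \<sigma> = j} = {\<sigma>\<in>F. js \<sigma> = j}" unfolding F1_def by auto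
      then show "(\<Sum>\<sigma>\<in>{\<sigma>\<in>F1. js \<sigma> = j}. h (js \<sigma>)) = real (c j) * h j"
        unfolding c_def by simp
    qed
    finally show ?thesis .
  qed
  have cF1: "card F1 = (\<Sum>j = 0..R. c j)"
  proof -
    have "card F1 = (\<Sum>\<sigma>\<in>F1. 1)" by simp
    also have "\<dots> = (\<Sum>j = 0..R. \<Sum>\<sigma>\<in>{\<sigma>\<in>F1. js \<sigma> = j}. 1)"
      using fin12 by (intro sum.group[symmetric]) (auto simp: F1_def)
    also have "\<dots> = (\<Sum>j = 0..R. c j)"
    proof (intro sum.cong refl)
      fix j assume "j \<in> {0..R}"
      then have "{\<sigma>\<in>F1. js \<sigma> = j} = {\<sigma>\<in>F. js \<sigma> = j}" unfolding F1_def by auto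
      then show "(\<Sum>\<sigma>\<in>{\<sigma>\<in>F1. js \<sigma> = j}. 1) = c j" unfolding c_def by simp
    qed
    finally show ?thesis .
  qed
  have cF: "card F = card F1 + card F2"
    unfolding F1_def F2_def using fin by (subst card_Un_disjoint[symmetric]) (auto intro: arg_cong[where f=card])
  have s2: "(\<Sum>\<sigma>\<in>F2. h (js \<sigma>)) \<le> real (card F2) * h R"
  proof -
    have "(\<Sum>\<sigma>\<in>F2. h (js \<sigma>)) \<le> (\<Sum>\<sigma>\<in>F2. h R)"
      by (intro sum_mono mono) (auto simp: F2_def)
    then show ?thesis by simp
  qed
  have F2le: "real (card F2) \<le> (\<Sum>j = 0..R. real (bb j) - real (c j))"
  proof -
    have "real (card F2) = real (card F) - (\<Sum>j = 0..R. real (c j))"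
      using cF cF1 by simp
    also have "\<dots> \<le> (\<Sum>j = 0..R. real (bb j)) - (\<Sum>j = 0..R. real (c j))"
    proof -
      have "real (card F) \<le> real (\<Sum>j = 0..R. bb j)" using tot by (simp only: of_nat_le_iff)
      then show ?thesis by simp
    qed
    finally show ?thesis by (simp add: sum_subtractf)
  qed
  have "real (card F2) * h R \<le> (\<Sum>j = 0..R. real (bb j) - real (c j)) * h R"
    using F2le hR by (rule mult_right_mono)
  also have "\<dots> = (\<Sum>j = 0..R. (real (bb j) - real (c j)) * h R)" by (simp add: sum_distrib_right)
  also have "\<dots> \<le> (\<Sum>j = 0..R. (real (bb j) - real (c j)) * h j)"
  proof (intro sum_mono mult_left_mono mono)
    fix j assume "j \<in> {0..R}"
    then show "j \<le> R" by auto
    show "0 \<le> real (bb j) - real (c j)" using cj[of j] unfolding c_def by simp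
  qed
  finally have "(\<Sum>\<sigma>\<in>F. h (js \<sigma>)) \<le> (\<Sum>j = 0..R. real (c j) * h j) + (\<Sum>j = 0..R. (real (bb j) - real (c j)) * h j)"
    using split s1 s2 by linarith
  also have "\<dots> = (\<Sum>j = 0..R. real (bb j) * h j)"
    by (simp add: sum.distrib[symmetric] algebra_simps)
  finally show ?thesis .
qed

lemma mat_rank_set_fin: "finite {card I | I. I \<subseteq> {..<R} \<and> indep_rows M C I}"
proof -
  have "{card I | I. I \<subseteq> {..<R} \<and> indep_rows M C I} \<subseteq> card ` Pow {..<R}" by auto
  then show ?thesis by (rule finite_subset) auto
qed

lemma indep_empty: "indep_rows M C {}" unfolding indep_rows_def by auto

lemma mat_rank_ge: "I \<subseteq> {..<R} \<Longrightarrow> indep_rows M C I \<Longrightarrow> card I \<le> mat_rank M R C"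
  unfolding mat_rank_def by (rule Max_ge[OF mat_rank_set_fin]) auto

lemma mat_rank_ex: "\<exists>I. I \<subseteq> {..<R} \<and> indep_rows M C I \<and> card I = mat_rank M R C"
proof -
  have "mat_rank M R C \<in> {card I | I. I \<subseteq> {..<R} \<and> indep_rows M C I}"
    unfolding mat_rank_def using mat_rank_set_fin indep_empty by (intro Max_in) auto
  then show ?thesis by auto
qed

lemma mat_rank_le: "mat_rank M R C \<le> R"
proof -
  obtain I where "I \<subseteq> {..<R}" "card I = mat_rank M R C" using mat_rank_ex by blast
  then show ?thesis using card_mono[of "{..<R}" I] by auto
qed

lemma pattern_set_fin: "finite {mat_rank M R C | M. \<forall>i<R. \<forall>j<C. M i j \<noteq> 0 \<longleftrightarrow> (i, j) \<in> P}"
  by (rule finite_subset[of _ "{..R}"]) (auto simp: mat_rank_le)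

lemma pattern_rank_ge:
  assumes "\<forall>i<R. \<forall>j<C. M i j \<noteq> 0 \<longleftrightarrow> (i, j) \<in> P"
  shows "mat_rank M R C \<le> pattern_rank R C P"
  unfolding pattern_rank_def using assms by (intro Max_ge[OF pattern_set_fin]) auto

lemma pattern_rank_le: "pattern_rank R C P \<le> R"
proof -
  let ?M = "\<lambda>i j. if (i, j) \<in> P then 1 else (0::real)"
  have "pattern_rank R C P \<in> {mat_rank M R C | M. \<forall>i<R. \<forall>j<C. M i j \<noteq> 0 \<longleftrightarrow> (i, j) \<in> P}"
    unfolding pattern_rank_def
    by (intro Max_in[OF pattern_set_fin]) (auto intro!: exI[of _ ?M])
  then show ?thesis using mat_rank_le by auto
qed

lemma rank_basis:
  "\<exists>I. I \<subseteq> {..<R} \<and> card I = mat_rank M R C \<and>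
      (\<forall>i<R. \<exists>\<gamma>. \<forall>j<C. M i j = (\<Sum>t\<in>I. \<gamma> t * M t j))"
proof -
  obtain I where I: "I \<subseteq> {..<R}" "indep_rows M C I" "card I = mat_rank M R C"
    using mat_rank_ex by blast
  have finI: "finite I" using I(1) finite_subset by blast
  have "\<exists>\<gamma>. \<forall>j<C. M i j = (\<Sum>t\<in>I. \<gamma> t * M t j)" if i: "i < R" for i
  proof (cases "i \<in> I")
    case True
    show ?thesis
    proof (intro exI[of _ "\<lambda>t. if t = i then 1 else 0"] allI impI)
      fix j
      have "(\<Sum>t\<in>I. (if t = i then 1 else 0) * M t j) = (\<Sum>t\<in>I. if t = i then M t j else 0)"
        by (rule sum.cong) auto
      also have "\<dots> = M i j" using True finI by (simp add: sum.delta')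
      finally show "M i j = (\<Sum>t\<in>I. (if t = i then 1 else 0) * M t j)" by simp
    qed
  next
    case False
    have "card (insert i I) > mat_rank M R C" using False finI I(3) by auto
    moreover have "insert i I \<subseteq> {..<R}" using I(1) i by auto
    ultimately have "\<not> indep_rows M C (insert i I)"
    proof (intro notI)
      assume gt: "card (insert i I) > mat_rank M R C" and sub: "insert i I \<subseteq> {..<R}"
        and ind: "indep_rows M C (insert i I)"
      have "card (insert i I) \<le> mat_rank M R C" by (rule mat_rank_ge[OF sub ind])
      then show False using gt by simp
    qed
    then obtain a where a: "\<forall>j<C. (\<Sum>t\<in>insert i I. a t * M t j) = 0" "\<exists>t\<in>insert i I. a t \<noteq> 0"
      unfolding indep_rows_def by blast
    have sp: "(\<Sum>t\<in>insert i I. a t * M t j) = a i * M i j + (\<Sum>t\<in>I. a t * M t j)" for j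
      using False finI by simp
    have ai: "a i \<noteq> 0"
    proof
      assume "a i = 0"
      then have "\<forall>j<C. (\<Sum>t\<in>I. a t * M t j) = 0" using a(1) sp by simp
      then have "\<forall>t\<in>I. a t = 0" using I(2) unfolding indep_rows_def by blast
      then show False using a(2) \<open>a i = 0\<close> by auto
    qed
    show ?thesis
    proof (intro exI[of _ "\<lambda>t. - a t / a i"] allI impI)
      fix j assume "j < C"
      then have "a i * M i j = - (\<Sum>t\<in>I. a t * M t j)" using a(1) sp by (simp add: eq_neg_iff_add_eq_0)
      then have "M i j = - (\<Sum>t\<in>I. a t * M t j) / a i" using ai by (simp add: field_simps)
      also have "\<dots> = (\<Sum>t\<in>I. - a t / a i * M t j)"
        by (simp add: sum_divide_distrib sum_negf[symmetric])
      finally show "M i j = (\<Sum>t\<in>I. - a t / a i * M t j)" .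
    qed
  qed
  then show ?thesis using I by blast
qed

definition alpha where "alpha n W l A i t = (\<Sum>j<n (l - 1). W l i j * A j t)"
definition beta where "beta n W b l c i = (\<Sum>j<n (l - 1). W l i j * c j) + b l i"

lemma preact_affine:
  "preact n W b l (inmap n l d A c x) i = (\<Sum>t<d. alpha n W l A i t * x t) + beta n W b l c i"
proof -
  have "preact n W b l (inmap n l d A c x) i
      = (\<Sum>j<n (l - 1). W l i j * ((\<Sum>t<d. A j t * x t) + c j)) + b l i"
    unfolding preact_def inmap_def by simp
  also have "\<dots> = (\<Sum>j<n (l - 1). \<Sum>t<d. W l i j * A j t * x t) + (\<Sum>j<n (l - 1). W l i j * c j) + b l i"
    by (simp add: algebra_simps sum.distrib sum_distrib_left)
  also have "(\<Sum>j<n (l - 1). \<Sum>t<d. W l i j * A j t * x t) = (\<Sum>t<d. alpha n W l A i t * x t)"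
    unfolding alpha_def by (subst sum.swap) (simp add: sum_distrib_right)
  finally show ?thesis unfolding beta_def by simp
qed

definition cell where
  "cell n W b l d A c \<sigma> = {x \<in> Rd d. \<forall>i<n l.
      (let z = preact n W b l (inmap n l d A c x) i in if \<sigma> i then z > 0 else z < 0)}"

definition Fcells where
  "Fcells n W b l d A c = {\<sigma>. (\<forall>i. \<sigma> i \<longrightarrow> i < n l) \<and> cell n W b l d A c \<sigma> \<noteq> {}}"

lemma finite_Fcells: "finite (Fcells n W b l d A c)"
proof -
  have "Fcells n W b l d A c \<subseteq> (\<lambda>S i. i \<in> S) ` Pow {..<n l}"
  proof
    fix \<sigma> assume "\<sigma> \<in> Fcells n W b l d A c"
    then have "\<sigma> = (\<lambda>i. i \<in> {i. \<sigma> i})" "{i. \<sigma> i} \<in> Pow {..<n l}" unfolding Fcells_def by auto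
    then show "\<sigma> \<in> (\<lambda>S i. i \<in> S) ` Pow {..<n l}" by blast
  qed
  then show ?thesis by (rule finite_subset) auto
qed

lemma dep_rows:
  assumes S: "S \<subseteq> {..<n l}" "card S > min k d"
    and k: "mat_rank (W l) (n l) (n (l - 1)) \<le> k"
  shows "\<exists>lm. (\<forall>t<d. (\<Sum>i\<in>S. lm i * alpha n W l A i t) = 0) \<and> (\<exists>i\<in>S. lm i \<noteq> 0)"
proof -
  have finS: "finite S" using S(1) finite_subset by blast
  show ?thesis
  proof (cases "card S > k")
    case True
    have "\<not> indep_rows (W l) (n (l - 1)) S"
    proof
      assume ind: "indep_rows (W l) (n (l - 1)) S"
      have "card S \<le> mat_rank (W l) (n l) (n (l - 1))" by (rule mat_rank_ge[OF S(1) ind])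
      then show False using k True by simp
    qed
    then obtain a where a: "\<forall>j<n (l - 1). (\<Sum>i\<in>S. a i * W l i j) = 0" "\<exists>i\<in>S. a i \<noteq> 0"
      unfolding indep_rows_def by blast
    have "(\<Sum>i\<in>S. a i * alpha n W l A i t) = 0" for t
    proof -
      have "(\<Sum>i\<in>S. a i * alpha n W l A i t) = (\<Sum>j<n (l - 1). (\<Sum>i\<in>S. a i * W l i j) * A j t)"
        unfolding alpha_def by (simp add: sum_distrib_left sum_distrib_right sum.swap[of _ S] algebra_simps)
      also have "\<dots> = 0" using a(1) by simp
      finally show ?thesis .
    qed
    then show ?thesis using a(2) by blast
  next
    case False
    then have "card S > d" using S(2) by auto
    then show ?thesis using dep_lemma[OF finS] by blast
  qed
qed

lemma sum_neg_strict:
  fixes f :: "nat \<Rightarrow> real"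
  assumes "finite S" "\<forall>i\<in>S. f i \<le> 0" "\<exists>i\<in>S. f i < 0"
  shows "(\<Sum>i\<in>S. f i) < 0"
  using sum_strict_mono_ex1[OF assms(1), of f "\<lambda>_. 0"] assms by auto

lemma no_shatter:
  assumes S: "S \<subseteq> {..<n l}" "card S > min k d"
    and k: "mat_rank (W l) (n l) (n (l - 1)) \<le> k"
  shows "\<not> shatters ((\<lambda>\<sigma>. {i. \<sigma> i}) ` Fcells n W b l d A c) S"
proof
  assume sh: "shatters ((\<lambda>\<sigma>. {i. \<sigma> i}) ` Fcells n W b l d A c) S"
  have finS: "finite S" using S(1) finite_subset by blast
  obtain lm0 where lm0: "\<forall>t<d. (\<Sum>i\<in>S. lm0 i * alpha n W l A i t) = 0" "\<exists>i\<in>S. lm0 i \<noteq> 0"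
    using dep_rows[where S=S and n=n and l=l and k=k and d=d and W=W and A=A, OF S k] by blast
  define K0 where "K0 = (\<Sum>i\<in>S. lm0 i * beta n W b l c i)"
  define lm where "lm = (\<lambda>i. if K0 \<ge> 0 then lm0 i else - lm0 i)"
  have lm1: "\<forall>t<d. (\<Sum>i\<in>S. lm i * alpha n W l A i t) = 0"
    using lm0(1) unfolding lm_def by (cases "K0 \<ge> 0") (auto simp: sum_negf)
  have lm2: "\<exists>i\<in>S. lm i \<noteq> 0" using lm0(2) unfolding lm_def by auto
  have K: "(\<Sum>i\<in>S. lm i * beta n W b l c i) \<ge> 0"
    unfolding lm_def using K0_def by (cases "K0 \<ge> 0") (auto simp: sum_negf)
  obtain B where B: "B \<in> (\<lambda>\<sigma>. {i. \<sigma> i}) ` Fcells n W b l d A c" "B \<inter> S = {i\<in>S. lm i < 0}"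
    using sh unfolding shatters_def by (metis (no_types, lifting) mem_Collect_eq subsetI)
  then obtain \<sigma> where \<sigma>: "\<sigma> \<in> Fcells n W b l d A c" "B = {i. \<sigma> i}" by auto
  then obtain x where x: "x \<in> cell n W b l d A c \<sigma>" unfolding Fcells_def by auto
  let ?g = "\<lambda>i. preact n W b l (inmap n l d A c x) i"
  have val: "(\<Sum>i\<in>S. lm i * ?g i) = (\<Sum>i\<in>S. lm i * beta n W b l c i)"
  proof -
    have "(\<Sum>i\<in>S. lm i * ?g i) = (\<Sum>i\<in>S. \<Sum>t<d. lm i * alpha n W l A i t * x t) + (\<Sum>i\<in>S. lm i * beta n W b l c i)"
      unfolding preact_affine by (simp add: algebra_simps sum.distrib sum_distrib_left)
    also have "(\<Sum>i\<in>S. \<Sum>t<d. lm i * alpha n W l A i t * x t) = (\<Sum>t<d. (\<Sum>i\<in>S. lm i * alpha n W l A i t) * x t)"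
      by (subst sum.swap) (simp add: sum_distrib_right)
    also have "\<dots> = 0" using lm1 by simp
    finally show ?thesis by simp
  qed
  have "(\<Sum>i\<in>S. lm i * ?g i) < 0"
  proof (rule sum_neg_strict[OF finS])
    have sg: "if \<sigma> i then ?g i > 0 else ?g i < 0" if "i \<in> S" for i
      using x that S(1) unfolding cell_def by (auto simp: Let_def)
    have st: "\<sigma> i \<longleftrightarrow> lm i < 0" if "i \<in> S" for i using B(2) \<sigma>(2) that by blast
    show "\<forall>i\<in>S. lm i * ?g i \<le> 0"
    proof
      fix i assume i: "i \<in> S"
      show "lm i * ?g i \<le> 0"
      proof (cases "\<sigma> i")
        case True then show ?thesis using sg[OF i] st[OF i] by (simp add: mult_neg_pos less_imp_le)
      next
        case False then show ?thesis using sg[OF i] st[OF i]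
          by (simp add: mult_nonneg_nonpos less_imp_le)
      qed
    qed
    obtain i where i: "i \<in> S" "lm i \<noteq> 0" using lm2 by blast
    show "\<exists>i\<in>S. lm i * ?g i < 0"
    proof (intro bexI[OF _ i(1)])
      show "lm i * ?g i < 0"
      proof (cases "\<sigma> i")
        case True then show ?thesis using sg[OF i(1)] st[OF i(1)] by (simp add: mult_neg_pos)
      next
        case False then show ?thesis using sg[OF i(1)] st[OF i(1)] i(2)
          by (simp add: mult_pos_neg)
      qed
    qed
  qed
  then show False using val K by linarith
qed

lemma card_Fcells:
  assumes k: "mat_rank (W l) (n l) (n (l - 1)) \<le> k"
  shows "card (Fcells n W b l d A c) \<le> (\<Sum>j = 0..min k d. n l choose j)"
proof -
  let ?F = "(\<lambda>\<sigma>. {i. \<sigma> i}) ` Fcells n W b l d A c"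
  have inj: "inj_on (\<lambda>\<sigma>. {i. \<sigma> i}) (Fcells n W b l d A c)"
    by (rule inj_onI) (auto simp: fun_eq_iff)
  have FP: "?F \<subseteq> Pow {..<n l}" unfolding Fcells_def by auto
  have "card (Fcells n W b l d A c) = card ?F" using card_image[OF inj] by simp
  also have "\<dots> \<le> card {S. S \<subseteq> {..<n l} \<and> shatters ?F S}" by (rule pajor[OF _ FP]) simp
  also have "\<dots> \<le> card {S. S \<subseteq> {..<n l} \<and> card S \<le> min k d}"
    using no_shatter[where n=n and l=l and k=k and d=d and W=W and A=A and b=b and c=c, OF _ _ k] by (intro card_mono) (auto simp: not_less[symmetric])
  also have "\<dots> = (\<Sum>j = 0..min k d. n l choose j)" by (rule card_small_subsets)
  finally show ?thesis .
qed

lemma outp_shift: "outp n W b l0 h (Suc t) = outp n W b (Suc l0) (layer n W b l0 h) t"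
  by (induction t) auto

lemma repr_generic:
  fixes u :: "nat \<Rightarrow> (nat \<Rightarrow> real) \<Rightarrow> real"
  assumes "finite Q" "card Q \<le> m"
  shows "\<exists>A' c'. \<forall>x. \<exists>y\<in>Rd m. (\<lambda>i. if i < n l then (\<Sum>q\<in>Q. M' i q * u q x) + c0 i else 0)
            = inmap n (Suc l) m A' c' y"
proof -
  obtain e where e: "bij_betw e {0..<card Q} Q" using ex_bij_betw_nat_finite[OF assms(1)] by blast
  define A' where "A' = (\<lambda>i s. if s < card Q then M' i (e s) else 0)"
  show ?thesis
  proof (intro exI[of _ A'] exI[of _ c0] allI)
    fix x
    define y where "y = (\<lambda>s. if s < card Q then u (e s) x else 0)"
    have "y \<in> Rd m" unfolding y_def Rd_def using assms(2) by auto
    moreover have "(\<Sum>j<m. A' i j * y j) = (\<Sum>q\<in>Q. M' i q * u q x)" for i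
    proof -
      have "(\<Sum>j<m. A' i j * y j) = (\<Sum>j\<in>{0..<card Q}. M' i (e j) * u (e j) x)"
        using assms(2) unfolding A'_def y_def
        by (intro sum.mono_neutral_cong_right) auto
      also have "\<dots> = (\<Sum>q\<in>Q. M' i q * u q x)"
        using sum.reindex_bij_betw[OF e, of "\<lambda>q. M' i q * u q x"] by simp
      finally show ?thesis .
    qed
    ultimately show "\<exists>y\<in>Rd m. (\<lambda>i. if i < n l then (\<Sum>q\<in>Q. M' i q * u q x) + c0 i else 0)
            = inmap n (Suc l) m A' c0 y"
      by (intro bexI[of _ y]) (auto simp: inmap_def)
  qed
qed

definition out where
  "out n W b l d A c \<sigma> x = (\<lambda>i. if i < n l then (if \<sigma> i then preact n W b l (inmap n l d A c x) i else 0) else 0)"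

lemma repr_a:
  assumes "d \<le> m"
  shows "\<exists>A' c'. \<forall>x. \<exists>y\<in>Rd m. out n W b l d A c \<sigma> x = inmap n (Suc l) m A' c' y"
proof -
  have ex: "\<exists>A' c'. \<forall>x. \<exists>y\<in>Rd m. (\<lambda>i. if i < n l then (\<Sum>q\<in>{..<d}. (if \<sigma> i then alpha n W l A i q else 0) * x q) + (if \<sigma> i then beta n W b l c i else 0) else 0)
            = inmap n (Suc l) m A' c' y"
    by (rule repr_generic) (use assms in auto)
  have eq: "out n W b l d A c \<sigma> x = (\<lambda>i. if i < n l then (\<Sum>q\<in>{..<d}. (if \<sigma> i then alpha n W l A i q else 0) * x q) + (if \<sigma> i then beta n W b l c i else 0) else 0)" for x
    unfolding out_def by (rule ext) (auto simp: preact_affine)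
  show ?thesis unfolding eq by (rule ex)
qed

lemma repr_b:
  assumes "finite {i. \<sigma> i}" "card {i. \<sigma> i} \<le> m"
  shows "\<exists>A' c'. \<forall>x. \<exists>y\<in>Rd m. out n W b l d A c \<sigma> x = inmap n (Suc l) m A' c' y"
proof -
  let ?P = "{i. \<sigma> i}"
  have ex: "\<exists>A' c'. \<forall>x. \<exists>y\<in>Rd m. (\<lambda>i. if i < n l then (\<Sum>q\<in>?P. (if i = q then 1 else 0) * preact n W b l (inmap n l d A c x) q) + 0 else 0)
            = inmap n (Suc l) m A' c' y"
    by (rule repr_generic) (use assms in auto)
  have eq: "out n W b l d A c \<sigma> x = (\<lambda>i. if i < n l then (\<Sum>q\<in>?P. (if i = q then 1 else 0) * preact n W b l (inmap n l d A c x) q) + 0 else 0)" for x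
  proof (rule ext)
    fix i
    have "(\<Sum>q\<in>?P. (if i = q then 1 else 0) * preact n W b l (inmap n l d A c x) q)
        = (\<Sum>q\<in>?P. if i = q then preact n W b l (inmap n l d A c x) q else 0)"
      by (rule sum.cong) auto
    also have "\<dots> = (if \<sigma> i then preact n W b l (inmap n l d A c x) i else 0)"
      using assms(1) by (simp add: sum.delta)
    finally show "out n W b l d A c \<sigma> x i = (if i < n l then (\<Sum>q\<in>?P. (if i = q then 1 else 0) * preact n W b l (inmap n l d A c x) q) + 0 else 0)"
      unfolding out_def by simp
  qed
  show ?thesis unfolding eq by (rule ex)
qed

lemma repr_c:
  assumes "mat_rank (W l) (n l) (n (l - 1)) \<le> m"
  shows "\<exists>A' c'. \<forall>x. \<exists>y\<in>Rd m. out n W b l d A c \<sigma> x = inmap n (Suc l) m A' c' y"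
proof -
  obtain I where I: "I \<subseteq> {..<n l}" "card I = mat_rank (W l) (n l) (n (l - 1))"
    "\<forall>i<n l. \<exists>\<gamma>. \<forall>j<n (l - 1). W l i j = (\<Sum>t\<in>I. \<gamma> t * W l t j)"
    using rank_basis[where R="n l" and M="W l" and C="n (l - 1)"] by blast
  have "\<forall>i\<in>{..<n l}. \<exists>\<gamma>. \<forall>j<n (l - 1). W l i j = (\<Sum>t\<in>I. \<gamma> t * W l t j)" using I(3) by (simp only: Ball_def lessThan_iff)
  then have "\<exists>\<Gamma>. \<forall>i\<in>{..<n l}. \<forall>j<n (l - 1). W l i j = (\<Sum>t\<in>I. \<Gamma> i t * W l t j)" by (rule bchoice)
  then obtain \<Gamma> where \<Gamma>: "\<forall>i\<in>{..<n l}. \<forall>j<n (l - 1). W l i j = (\<Sum>t\<in>I. \<Gamma> i t * W l t j)" by (elim exE)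
  have finI: "finite I" using I(1) finite_subset by blast
  let ?g = "\<lambda>x q. preact n W b l (inmap n l d A c x) q"
  have ex: "\<exists>A' c'. \<forall>x. \<exists>y\<in>Rd m. (\<lambda>i. if i < n l then (\<Sum>q\<in>I. (if \<sigma> i then \<Gamma> i q else 0) * (?g x q - b l q)) + (if \<sigma> i then b l i else 0) else 0)
            = inmap n (Suc l) m A' c' y"
    by (rule repr_generic) (use assms finI I(2) in auto)
  have key: "?g x i = (\<Sum>q\<in>I. \<Gamma> i q * (?g x q - b l q)) + b l i" if i: "i < n l" for x i
  proof -
    let ?z = "inmap n l d A c x"
    have iI: "i \<in> {..<n l}" using i by simp
    have "(\<Sum>j<n (l - 1). W l i j * ?z j) = (\<Sum>j<n (l - 1). (\<Sum>t\<in>I. \<Gamma> i t * W l t j) * ?z j)"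
    proof (rule sum.cong[OF refl])
      fix j assume "j \<in> {..<n (l - 1)}"
      then have "j < n (l - 1)" by simp
      then have "W l i j = (\<Sum>t\<in>I. \<Gamma> i t * W l t j)" using bspec[OF \<Gamma> iI] by blast
      then show "W l i j * ?z j = (\<Sum>t\<in>I. \<Gamma> i t * W l t j) * ?z j" by (simp only:)
    qed
    then have "?g x i = (\<Sum>j<n (l - 1). (\<Sum>t\<in>I. \<Gamma> i t * W l t j) * ?z j) + b l i"
      unfolding preact_def by (simp only:)
    also have "(\<Sum>j<n (l - 1). (\<Sum>t\<in>I. \<Gamma> i t * W l t j) * ?z j) = (\<Sum>j<n (l - 1). \<Sum>t\<in>I. \<Gamma> i t * (W l t j * ?z j))"
      by (simp only: sum_distrib_right mult.assoc)
    also have "\<dots> = (\<Sum>t\<in>I. \<Sum>j<n (l - 1). \<Gamma> i t * (W l t j * ?z j))"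
      by (rule sum.swap)
    also have "\<dots> = (\<Sum>t\<in>I. \<Gamma> i t * (\<Sum>j<n (l - 1). W l t j * ?z j))"
      by (simp only: sum_distrib_left)
    also have "\<dots> = (\<Sum>q\<in>I. \<Gamma> i q * (?g x q - b l q))"
      unfolding preact_def by simp
    finally show ?thesis .
  qed
  have eq: "out n W b l d A c \<sigma> x = (\<lambda>i. if i < n l then (\<Sum>q\<in>I. (if \<sigma> i then \<Gamma> i q else 0) * (?g x q - b l q)) + (if \<sigma> i then b l i else 0) else 0)" for x
  proof (rule ext)
    fix i
    show "out n W b l d A c \<sigma> x i = (if i < n l then (\<Sum>q\<in>I. (if \<sigma> i then \<Gamma> i q else 0) * (?g x q - b l q)) + (if \<sigma> i then b l i else 0) else 0)"
    proof (cases "i < n l \<and> \<sigma> i")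
      case True
      have "out n W b l d A c \<sigma> x i = ?g x i" using True by (simp add: out_def)
      also have "\<dots> = (\<Sum>q\<in>I. \<Gamma> i q * (?g x q - b l q)) + b l i" by (rule key) (use True in simp)
      also have "\<dots> = (if i < n l then (\<Sum>q\<in>I. (if \<sigma> i then \<Gamma> i q else 0) * (?g x q - b l q)) + (if \<sigma> i then b l i else 0) else 0)"
        using True by simp
      finally show ?thesis .
    next
      case False
      then show ?thesis by (auto simp: out_def)
    qed
  qed
  show ?thesis unfolding eq by (rule ex)
qed

lemma repr_cell:
  assumes k: "mat_rank (W l) (n l) (n (l - 1)) \<le> k" and fin: "finite {i. \<sigma> i}"
  shows "\<exists>A' c'. \<forall>x. \<exists>y\<in>Rd (min (card {i. \<sigma> i}) (min d k)). out n W b l d A c \<sigma> x = inmap n (Suc l) (min (card {i. \<sigma> i}) (min d k)) A' c' y"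
proof -
  let ?m = "min (card {i. \<sigma> i}) (min d k)"
  have "?m = card {i. \<sigma> i} \<or> ?m = d \<or> ?m = k" by linarith
  then show ?thesis
  proof (elim disjE)
    assume a: "?m = card {i. \<sigma> i}"
    have "card {i. \<sigma> i} \<le> ?m" using a by simp
    then show ?thesis by (rule repr_b[OF fin])
  next
    assume a: "?m = d"
    have "d \<le> ?m" using a by simp
    then show ?thesis by (rule repr_a)
  next
    assume a: "?m = k"
    have "mat_rank (W l) (n l) (n (l - 1)) \<le> ?m" using a k by simp
    then show ?thesis by (rule repr_c)
  qed
qed

lemma config_cell:
  assumes "l \<le> L" "x \<in> config_set n L W b l d A c \<tau>"
  shows "x \<in> cell n W b l d A c (\<tau> l)"
proof -
  have all: "\<forall>m\<in>{l..L}. \<forall>i<n m. (let z = preact n W b m (outp n W b l (inmap n l d A c x) (m - l)) i in if \<tau> m i then z > 0 else z < 0)"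
    and "x \<in> Rd d" using assms(2) unfolding config_set_def by blast+
  have lin: "l \<in> {l..L}" using assms(1) by auto
  have h: "\<forall>i<n l. (let z = preact n W b l (outp n W b l (inmap n l d A c x) (l - l)) i in if \<tau> l i then z > 0 else z < 0)"
    using all lin by blast
  then show ?thesis using \<open>x \<in> Rd d\<close> unfolding cell_def by simp
qed

lemma config_layer:
  assumes "l \<le> L" "x \<in> config_set n L W b l d A c \<tau>"
  shows "layer n W b l (inmap n l d A c x) = out n W b l d A c (\<tau> l) x"
proof (rule ext)
  fix i
  show "layer n W b l (inmap n l d A c x) i = out n W b l d A c (\<tau> l) x i"
  proof (cases "i < n l")
    case True
    then have "(let z = preact n W b l (inmap n l d A c x) i in if \<tau> l i then z > 0 else z < 0)"
      using config_cell[OF assms] unfolding cell_def by auto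
    then show ?thesis unfolding layer_def out_def using True by (auto simp: Let_def split: if_splits)
  next
    case False
    then show ?thesis unfolding layer_def out_def by auto
  qed
qed

lemma NE_last:
  "card (NE n L W b L d A c) \<le> card (Fcells n W b L d A c)"
proof (rule card_inj_on_le[of "\<lambda>\<tau>. \<tau> L"])
  show "inj_on (\<lambda>\<tau>. \<tau> L) (NE n L W b L d A c)"
  proof (rule inj_onI)
    fix \<tau>1 \<tau>2 assume "\<tau>1 \<in> NE n L W b L d A c" "\<tau>2 \<in> NE n L W b L d A c" "\<tau>1 L = \<tau>2 L"
    then have n1: "\<forall>m i. \<tau>1 m i \<longrightarrow> m \<in> {L..L} \<and> i < n m" and n2: "\<forall>m i. \<tau>2 m i \<longrightarrow> m \<in> {L..L} \<and> i < n m"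
      and e: "\<tau>1 L = \<tau>2 L" unfolding NE_def Norm_def by blast+
    show "\<tau>1 = \<tau>2"
    proof (rule ext)
      fix m show "\<tau>1 m = \<tau>2 m"
      proof (cases "m = L")
        case True then show ?thesis using e by simp
      next
        case False then show ?thesis using n1 n2 by (auto simp: fun_eq_iff)
      qed
    qed
  qed
  show "(\<lambda>\<tau>. \<tau> L) ` NE n L W b L d A c \<subseteq> Fcells n W b L d A c"
  proof
    fix \<sigma> assume "\<sigma> \<in> (\<lambda>\<tau>. \<tau> L) ` NE n L W b L d A c"
    then obtain \<tau> where t: "\<tau> \<in> NE n L W b L d A c" "\<sigma> = \<tau> L" by auto
    then have "config_set n L W b L d A c \<tau> \<noteq> {}" unfolding NE_def by blast
    then obtain x where x: "x \<in> config_set n L W b L d A c \<tau>" by blast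
    have "x \<in> cell n W b L d A c (\<tau> L)" by (rule config_cell[OF order_refl x])
    then have c: "cell n W b L d A c \<sigma> \<noteq> {}" using t(2) by blast
    have "\<forall>i. \<tau> L i \<longrightarrow> i < n L" using t(1) unfolding NE_def Norm_def by blast
    then show "\<sigma> \<in> Fcells n W b L d A c" using c t(2) unfolding Fcells_def by blast
  qed
  show "finite (Fcells n W b L d A c)" by (rule finite_Fcells)
qed

lemma NE_split:
  assumes lL: "l < L" and k: "mat_rank (W l) (n l) (n (l - 1)) \<le> k"
  shows "\<exists>Af cf. card (NE n L W b l d A c) \<le>
    (\<Sum>\<sigma>\<in>Fcells n W b l d A c. card (NE n L W b (Suc l) (min (card {i. \<sigma> i}) (min d k)) (Af \<sigma>) (cf \<sigma>)))"
proof -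
  let ?F = "Fcells n W b l d A c"
  let ?m = "\<lambda>\<sigma>. min (card {i. \<sigma> i}) (min d k)"
  have "\<forall>\<sigma>\<in>?F. \<exists>p. \<forall>x. \<exists>y\<in>Rd (?m \<sigma>). out n W b l d A c \<sigma> x = inmap n (Suc l) (?m \<sigma>) (fst p) (snd p) y"
  proof
    fix \<sigma> assume "\<sigma> \<in> ?F"
    then have "{i. \<sigma> i} \<subseteq> {..<n l}" unfolding Fcells_def by blast
    then have "finite {i. \<sigma> i}" by (rule finite_subset) simp
    then show "\<exists>p. \<forall>x. \<exists>y\<in>Rd (?m \<sigma>). out n W b l d A c \<sigma> x = inmap n (Suc l) (?m \<sigma>) (fst p) (snd p) y"
    proof -
      assume fin: "finite {i. \<sigma> i}"
      obtain A' c' where H: "\<forall>x. \<exists>y\<in>Rd (?m \<sigma>). out n W b l d A c \<sigma> x = inmap n (Suc l) (?m \<sigma>) A' c' y"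
        using repr_cell[where W=W and l=l and n=n and k=k and b=b and d=d and A=A and c=c, OF k fin] by blast
      show ?thesis by (rule exI[of _ "(A', c')"]) (simp add: H)
    qed
  qed
  then have "\<exists>pf. \<forall>\<sigma>\<in>?F. \<forall>x. \<exists>y\<in>Rd (?m \<sigma>). out n W b l d A c \<sigma> x = inmap n (Suc l) (?m \<sigma>) (fst (pf \<sigma>)) (snd (pf \<sigma>)) y"
    by (rule bchoice)
  then obtain pf where pf: "\<forall>\<sigma>\<in>?F. \<forall>x. \<exists>y\<in>Rd (?m \<sigma>). out n W b l d A c \<sigma> x = inmap n (Suc l) (?m \<sigma>) (fst (pf \<sigma>)) (snd (pf \<sigma>)) y"
    by (elim exE)
  define Af where "Af = (\<lambda>\<sigma>. fst (pf \<sigma>))"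
  define cf where "cf = (\<lambda>\<sigma>. snd (pf \<sigma>))"
  have NEU: "NE n L W b l d A c = (\<Union>\<sigma>\<in>?F. {\<tau>\<in>NE n L W b l d A c. \<tau> l = \<sigma>})"
  proof (intro equalityI subsetI)
    fix \<tau> assume t: "\<tau> \<in> NE n L W b l d A c"
    then have "config_set n L W b l d A c \<tau> \<noteq> {}" unfolding NE_def by blast
    then obtain x where "x \<in> config_set n L W b l d A c \<tau>" by blast
    then have xc: "x \<in> cell n W b l d A c (\<tau> l)" by (rule config_cell[OF less_imp_le[OF lL]])
    have "\<forall>i. \<tau> l i \<longrightarrow> i < n l" using t unfolding NE_def Norm_def by blast
    then have "\<tau> l \<in> ?F" using xc unfolding Fcells_def by blast
    then show "\<tau> \<in> (\<Union>\<sigma>\<in>?F. {\<tau>\<in>NE n L W b l d A c. \<tau> l = \<sigma>})" using t by blast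
  next
    fix \<tau> assume "\<tau> \<in> (\<Union>\<sigma>\<in>?F. {\<tau>\<in>NE n L W b l d A c. \<tau> l = \<sigma>})"
    then show "\<tau> \<in> NE n L W b l d A c" by blast
  qed
  have fib: "card {\<tau>\<in>NE n L W b l d A c. \<tau> l = \<sigma>} \<le> card (NE n L W b (Suc l) (?m \<sigma>) (Af \<sigma>) (cf \<sigma>))"
    if s: "\<sigma> \<in> ?F" for \<sigma>
  proof -
    let ?f = "\<lambda>\<tau>::nat \<Rightarrow> nat \<Rightarrow> bool. \<tau>(l := (\<lambda>_. False))"
    let ?A = "{\<tau>\<in>NE n L W b l d A c. \<tau> l = \<sigma>}"
    let ?B = "NE n L W b (Suc l) (?m \<sigma>) (Af \<sigma>) (cf \<sigma>)"
    have inj: "inj_on ?f ?A"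
    proof (rule inj_onI)
      fix \<tau>1 \<tau>2 assume a1: "\<tau>1 \<in> ?A" and a2: "\<tau>2 \<in> ?A" and eq: "?f \<tau>1 = ?f \<tau>2"
      show "\<tau>1 = \<tau>2"
      proof (rule ext)
        fix m
        show "\<tau>1 m = \<tau>2 m"
        proof (cases "m = l")
          case True then show ?thesis using a1 a2 by simp
        next
          case False then show ?thesis using fun_cong[OF eq, of m] by simp
        qed
      qed
    qed
    have sub: "?f ` ?A \<subseteq> ?B"
    proof
      fix \<tau>' assume "\<tau>' \<in> ?f ` ?A"
      then obtain \<tau> where t: "\<tau> \<in> NE n L W b l d A c" "\<tau> l = \<sigma>" "\<tau>' = \<tau>(l := (\<lambda>_. False))" by blast
      have "config_set n L W b l d A c \<tau> \<noteq> {}" using t(1) unfolding NE_def by blast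
      then obtain x where x: "x \<in> config_set n L W b l d A c \<tau>" by blast
      have "\<forall>x. \<exists>y\<in>Rd (?m \<sigma>). out n W b l d A c \<sigma> x = inmap n (Suc l) (?m \<sigma>) (Af \<sigma>) (cf \<sigma>) y"
        using bspec[OF pf s] unfolding Af_def cf_def .
      then obtain y where y: "y \<in> Rd (?m \<sigma>)" "out n W b l d A c \<sigma> x = inmap n (Suc l) (?m \<sigma>) (Af \<sigma>) (cf \<sigma>) y"
        by blast
      have lay0: "layer n W b l (inmap n l d A c x) = out n W b l d A c (\<tau> l) x"
        by (rule config_layer[OF less_imp_le[OF lL] x])
      have lay: "layer n W b l (inmap n l d A c x) = inmap n (Suc l) (?m \<sigma>) (Af \<sigma>) (cf \<sigma>) y"
        using lay0 t(2) y(2) by simp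
      have xall: "\<forall>m\<in>{l..L}. \<forall>i<n m. (let z = preact n W b m (outp n W b l (inmap n l d A c x) (m - l)) i in if \<tau> m i then z > 0 else z < 0)"
        using x unfolding config_set_def by blast
      have "y \<in> config_set n L W b (Suc l) (?m \<sigma>) (Af \<sigma>) (cf \<sigma>) \<tau>'"
        unfolding config_set_def
      proof (intro CollectI conjI ballI allI impI)
        show "y \<in> Rd (?m \<sigma>)" by (rule y(1))
        fix mm i assume mm: "mm \<in> {Suc l..L}" and i: "i < n mm"
        have e: "mm - l = Suc (mm - Suc l)" using mm by auto
        have mm': "mm \<in> {l..L}" using mm by auto
        have o: "outp n W b l (inmap n l d A c x) (mm - l) = outp n W b (Suc l) (inmap n (Suc l) (?m \<sigma>) (Af \<sigma>) (cf \<sigma>) y) (mm - Suc l)"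
          unfolding e outp_shift lay ..
        have h: "(let z = preact n W b mm (outp n W b l (inmap n l d A c x) (mm - l)) i in if \<tau> mm i then z > 0 else z < 0)"
          using xall mm' i by blast
        have tt: "\<tau>' mm = \<tau> mm" using t(3) mm by auto
        show "let z = preact n W b mm (outp n W b (Suc l) (inmap n (Suc l) (?m \<sigma>) (Af \<sigma>) (cf \<sigma>) y) (mm - Suc l)) i
           in if \<tau>' mm i then 0 < z else z < 0" using h unfolding o tt .
      qed
      moreover have "\<tau>' \<in> Norm n L (Suc l)"
        unfolding Norm_def
      proof (intro CollectI allI impI)
        fix m i assume a: "\<tau>' m i"
        then have "m \<noteq> l" "\<tau> m i" using t(3) by (auto split: if_splits)
        moreover have "\<tau> \<in> Norm n L l" using t(1) unfolding NE_def by blast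
        ultimately have "m \<in> {l..L}" "i < n m" "m \<noteq> l" unfolding Norm_def by blast+
        then show "m \<in> {Suc l..L} \<and> i < n m" by auto
      qed
      ultimately show "\<tau>' \<in> ?B" unfolding NE_def by blast
    qed
    show ?thesis by (rule card_inj_on_le[OF inj sub finite_NE])
  qed
  have c1: "card (\<Union>\<sigma>\<in>?F. {\<tau>\<in>NE n L W b l d A c. \<tau> l = \<sigma>}) \<le> (\<Sum>\<sigma>\<in>?F. card {\<tau>\<in>NE n L W b l d A c. \<tau> l = \<sigma>})"
    by (rule card_UN_le[OF finite_Fcells])
  have "card (NE n L W b l d A c) \<le> (\<Sum>\<sigma>\<in>?F. card {\<tau>\<in>NE n L W b l d A c. \<tau> l = \<sigma>})"
    using c1 by (simp only: NEU[symmetric])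
  also have "\<dots> \<le> (\<Sum>\<sigma>\<in>?F. card (NE n L W b (Suc l) (?m \<sigma>) (Af \<sigma>) (cf \<sigma>)))"
    by (rule sum_mono) (rule fib)
  finally have fin: "card (NE n L W b l d A c) \<le> (\<Sum>\<sigma>\<in>?F. card (NE n L W b (Suc l) (?m \<sigma>) (Af \<sigma>) (cf \<sigma>)))" .
  show ?thesis by (intro exI[of _ Af] exI[of _ cf]) (rule fin)
qed

definition MRS where
  "MRS n L pat l0 d = {real (card (NE n L W b l0 d A c)) | W b A c. supported n L l0 pat W}"

lemma MR_eq: "max_regions n L pat l0 d = Sup (MRS n L pat l0 d)"
  unfolding max_regions_def MRS_def card_lin_regions ..

definition W0 :: "(nat \<Rightarrow> (nat \<times> nat) set) \<Rightarrow> nat \<Rightarrow> nat \<Rightarrow> nat \<Rightarrow> real" where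
  "W0 pat = (\<lambda>m i j. if (i, j) \<in> pat m then 1 else 0)"

lemma supported_W0: "supported n L l0 pat (W0 pat)"
  unfolding supported_def W0_def by auto

lemma MRS_ne: "MRS n L pat l0 d \<noteq> {}"
  unfolding MRS_def using supported_W0 by blast

lemma MRS_bdd: "bdd_above (MRS n L pat l0 d)"
proof (rule bdd_aboveI)
  fix r assume "r \<in> MRS n L pat l0 d"
  then obtain W b A c where "r = real (card (NE n L W b l0 d A c))" unfolding MRS_def by blast
  then show "r \<le> real (card (Norm n L l0))" using card_NE_le by simp
qed

lemma MR_upper:
  assumes "supported n L l0 pat W"
  shows "real (card (NE n L W b l0 d A c)) \<le> max_regions n L pat l0 d"
  unfolding MR_eq by (rule cSup_upper[OF _ MRS_bdd]) (use assms in \<open>auto simp: MRS_def\<close>)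

lemma MR_least:
  assumes "\<And>W b A c. supported n L l0 pat W \<Longrightarrow> real (card (NE n L W b l0 d A c)) \<le> B"
  shows "max_regions n L pat l0 d \<le> B"
  unfolding MR_eq by (rule cSup_least[OF MRS_ne]) (use assms in \<open>auto simp: MRS_def\<close>)

lemma MR_nonneg: "0 \<le> max_regions n L pat l0 d"
proof -
  have "0 \<le> real (card (NE n L (W0 pat) b l0 d A c))" by simp
  also have "\<dots> \<le> max_regions n L pat l0 d" by (rule MR_upper[OF supported_W0])
  finally show ?thesis .
qed

lemma inmap_mono:
  assumes "x \<in> Rd d" "d \<le> d'"
  shows "inmap n l0 d' A c x = inmap n l0 d A c x"
proof -
  have e: "(\<Sum>j<d'. A i j * x j) = (\<Sum>j<d. A i j * x j)" for i
    using assms unfolding Rd_def by (intro sum.mono_neutral_right) auto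
  show ?thesis unfolding inmap_def e by (rule refl)
qed

lemma config_mono:
  assumes "d \<le> d'"
  shows "config_set n L W b l0 d A c \<tau> \<subseteq> config_set n L W b l0 d' A c \<tau>"
proof
  fix x assume x: "x \<in> config_set n L W b l0 d A c \<tau>"
  then have xd: "x \<in> Rd d" unfolding config_set_def by blast
  then have "x \<in> Rd d'" using assms unfolding Rd_def by auto
  moreover have "inmap n l0 d' A c x = inmap n l0 d A c x" by (rule inmap_mono[OF xd assms])
  ultimately show "x \<in> config_set n L W b l0 d' A c \<tau>" using x unfolding config_set_def by simp
qed

lemma NE_mono:
  assumes "d \<le> d'"
  shows "card (NE n L W b l0 d A c) \<le> card (NE n L W b l0 d' A c)"
proof (rule card_mono[OF finite_NE])
  show "NE n L W b l0 d A c \<subseteq> NE n L W b l0 d' A c"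
    unfolding NE_def using config_mono[OF assms, of n L W b l0 A c] by blast
qed

lemma MR_mono:
  assumes "d \<le> d'"
  shows "max_regions n L pat l0 d \<le> max_regions n L pat l0 d'"
proof (rule MR_least)
  fix W b A c assume s: "supported n L l0 pat W"
  have "real (card (NE n L W b l0 d A c)) \<le> real (card (NE n L W b l0 d' A c))"
    using NE_mono[OF assms] by simp
  also have "\<dots> \<le> max_regions n L pat l0 d'" by (rule MR_upper[OF s])
  finally show "real (card (NE n L W b l0 d A c)) \<le> max_regions n L pat l0 d'" .
qed

lemma supported_Suc: "supported n L l0 pat W \<Longrightarrow> supported n L (Suc l0) pat W"
  unfolding supported_def by auto

lemma supported_rank:
  assumes "supported n L l0 pat W" "l0 \<le> l" "l \<le> L"
  shows "mat_rank (W l) (n l) (n (l - 1)) \<le> pattern_rank (n l) (n (l - 1)) (pat l)"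
proof (rule pattern_rank_ge)
  show "\<forall>i<n l. \<forall>j<n (l - 1). (W l i j \<noteq> 0) = ((i, j) \<in> pat l)"
    using assms unfolding supported_def by auto
qed

lemma K1:
  "max_regions n L pat L d \<le> (\<Sum>j = 0..min (pattern_rank (n L) (n (L - 1)) (pat L)) d. real (n L choose j))"
proof (rule MR_least)
  fix W b A c assume s: "supported n L L pat W"
  let ?k = "pattern_rank (n L) (n (L - 1)) (pat L)"
  have k: "mat_rank (W L) (n L) (n (L - 1)) \<le> ?k" by (rule supported_rank[OF s]) auto
  have "card (NE n L W b L d A c) \<le> (\<Sum>j = 0..min ?k d. n L choose j)"
    using NE_last[of n L W b d A c] card_Fcells[where W=W and l=L and n=n and k="?k" and b=b and d=d and A=A and c=c, OF k]
    by linarith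
  then have "real (card (NE n L W b L d A c)) \<le> real (\<Sum>j = 0..min ?k d. n L choose j)"
    by (simp only: of_nat_le_iff)
  then show "real (card (NE n L W b L d A c)) \<le> (\<Sum>j = 0..min ?k d. real (n L choose j))"
    by simp
qed

lemma card_js:
  assumes F: "\<forall>i. \<sigma> i \<longrightarrow> i < N"
  shows "card {i. i < N \<and> \<not> \<sigma> i} = N - card {i. \<sigma> i}"
proof -
  have "{i. i < N \<and> \<not> \<sigma> i} = {..<N} - {i. \<sigma> i}" by auto
  moreover have "{i. \<sigma> i} \<subseteq> {..<N}" using F by auto
  ultimately show ?thesis by (simp add: card_Diff_subset finite_subset)
qed

lemma K2:
  assumes lL: "l < L"
  shows "max_regions n L pat l d \<le>
    (\<Sum>j = 0..min (pattern_rank (n l) (n (l - 1)) (pat l)) d. real (n l choose j) *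
        max_regions n L pat (Suc l) (min (n l - j) (min d (pattern_rank (n l) (n (l - 1)) (pat l)))))"
proof (rule MR_least)
  fix W b A c assume s: "supported n L l pat W"
  define k where "k = pattern_rank (n l) (n (l - 1)) (pat l)"
  have k: "mat_rank (W l) (n l) (n (l - 1)) \<le> k" unfolding k_def by (rule supported_rank[OF s]) (use lL in auto)
  let ?F = "Fcells n W b l d A c"
  define h where "h = (\<lambda>j. max_regions n L pat (Suc l) (min (n l - j) (min d k)))"
  define js where "js = (\<lambda>\<sigma>::nat \<Rightarrow> bool. n l - card {i. \<sigma> i})"
  obtain Af cf where AF: "card (NE n L W b l d A c) \<le>
    (\<Sum>\<sigma>\<in>?F. card (NE n L W b (Suc l) (min (card {i. \<sigma> i}) (min d k)) (Af \<sigma>) (cf \<sigma>)))"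
    using NE_split[where l=l and L=L and n=n and W=W and k=k and b=b and d=d and A=A and c=c, OF lL k] by blast
  have Fsub: "\<forall>i. \<sigma> i \<longrightarrow> i < n l" if "\<sigma> \<in> ?F" for \<sigma> using that unfolding Fcells_def by blast
  have cardle: "card {i. \<sigma> i} \<le> n l" if "\<sigma> \<in> ?F" for \<sigma>
  proof -
    have "{i. \<sigma> i} \<subseteq> {..<n l}" using Fsub[OF that] by auto
    then show ?thesis using card_mono[of "{..<n l}" "{i. \<sigma> i}"] by simp
  qed
  have "real (card (NE n L W b l d A c)) \<le>
    real (\<Sum>\<sigma>\<in>?F. card (NE n L W b (Suc l) (min (card {i. \<sigma> i}) (min d k)) (Af \<sigma>) (cf \<sigma>)))"
    using AF by (simp only: of_nat_le_iff)
  also have "\<dots> = (\<Sum>\<sigma>\<in>?F. real (card (NE n L W b (Suc l) (min (card {i. \<sigma> i}) (min d k)) (Af \<sigma>) (cf \<sigma>))))"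
    by simp
  also have "\<dots> \<le> (\<Sum>\<sigma>\<in>?F. h (js \<sigma>))"
  proof (rule sum_mono)
    fix \<sigma> assume sF: "\<sigma> \<in> ?F"
    have "n l - js \<sigma> = card {i. \<sigma> i}" unfolding js_def using cardle[OF sF] by simp
    then have "h (js \<sigma>) = max_regions n L pat (Suc l) (min (card {i. \<sigma> i}) (min d k))"
      unfolding h_def by simp
    then show "real (card (NE n L W b (Suc l) (min (card {i. \<sigma> i}) (min d k)) (Af \<sigma>) (cf \<sigma>))) \<le> h (js \<sigma>)"
      using MR_upper[OF supported_Suc[OF s]] by simp
  qed
  also have "\<dots> \<le> (\<Sum>j = 0..min k d. real (n l choose j) * h j)"
  proof (rule greedy[OF finite_Fcells])
    fix j
    let ?S = "{\<sigma> \<in> ?F. js \<sigma> = j}"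
    let ?g = "\<lambda>\<sigma>::nat \<Rightarrow> bool. {i. i < n l \<and> \<not> \<sigma> i}"
    have inj: "inj_on ?g ?S"
    proof (rule inj_onI)
      fix \<sigma>1 \<sigma>2 assume a1: "\<sigma>1 \<in> ?S" and a2: "\<sigma>2 \<in> ?S" and e: "?g \<sigma>1 = ?g \<sigma>2"
      show "\<sigma>1 = \<sigma>2"
      proof (rule ext)
        fix i show "\<sigma>1 i = \<sigma>2 i"
        proof (cases "i < n l")
          case True
          have "i \<in> ?g \<sigma>1 \<longleftrightarrow> i \<in> ?g \<sigma>2" using e by simp
          then show ?thesis using True by auto
        next
          case False
          then show ?thesis using Fsub[of \<sigma>1] Fsub[of \<sigma>2] a1 a2 by auto
        qed
      qed
    qed
    have sub: "?g ` ?S \<subseteq> {B. B \<subseteq> {..<n l} \<and> card B = j}"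
    proof
      fix B assume "B \<in> ?g ` ?S"
      then obtain \<sigma> where s1: "\<sigma> \<in> ?F" "js \<sigma> = j" "B = ?g \<sigma>" by blast
      have "card B = n l - card {i. \<sigma> i}" using s1(3) card_js[OF Fsub[OF s1(1)]] by simp
      then show "B \<in> {B. B \<subseteq> {..<n l} \<and> card B = j}" using s1 unfolding js_def by auto
    qed
    have "card ?S \<le> card {B. B \<subseteq> {..<n l} \<and> card B = j}"
      by (rule card_inj_on_le[OF inj sub]) simp
    also have "\<dots> = n l choose j" using n_subsets[of "{..<n l}" j] by simp
    finally show "card ?S \<le> n l choose j" .
  next
    show "card ?F \<le> (\<Sum>j = 0..min k d. n l choose j)"
      by (rule card_Fcells[where W=W and l=l and n=n and k=k and b=b and d=d and A=A and c=c, OF k])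
  next
    fix i j :: nat assume "i \<le> j"
    then have "min (n l - j) (min d k) \<le> min (n l - i) (min d k)" by auto
    then show "h j \<le> h i" unfolding h_def by (rule MR_mono)
  next
    show "0 \<le> h (min k d)" unfolding h_def by (rule MR_nonneg)
  qed
  finally show "real (card (NE n L W b l d A c)) \<le>
    (\<Sum>j = 0..min (pattern_rank (n l) (n (l - 1)) (pat l)) d. real (n l choose j) *
        max_regions n L pat (Suc l) (min (n l - j) (min d (pattern_rank (n l) (n (l - 1)) (pat l)))))"
    unfolding h_def k_def .
qed

lemma pat_prob_nonneg: "0 \<le> S \<Longrightarrow> S \<le> 1 \<Longrightarrow> 0 \<le> pat_prob R C S P"
  unfolding pat_prob_def by simp

lemma group_rank:
  fixes B :: "nat \<Rightarrow> real"
  shows "(\<Sum>P\<in>Pow (box R C). pat_prob R C S P * B (pattern_rank R C P))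
       = (\<Sum>k = 0..R. prob_rank k R C S * B k)"
proof -
  have fin: "finite (Pow (box R C))" unfolding box_def by simp
  have "(\<Sum>k = 0..R. prob_rank k R C S * B k)
     = (\<Sum>k = 0..R. \<Sum>P\<in>{P \<in> Pow (box R C). pattern_rank R C P = k}. pat_prob R C S P * B (pattern_rank R C P))"
  proof (rule sum.cong[OF refl])
    fix k
    have "prob_rank k R C S * B k = (\<Sum>P\<in>{P \<in> Pow (box R C). pattern_rank R C P = k}. pat_prob R C S P) * B k"
      unfolding prob_rank_def by simp
    also have "\<dots> = (\<Sum>P\<in>{P \<in> Pow (box R C). pattern_rank R C P = k}. pat_prob R C S P * B (pattern_rank R C P))"
      by (simp add: sum_distrib_right)
    finally show "prob_rank k R C S * B k = (\<Sum>P\<in>{P \<in> Pow (box R C). pattern_rank R C P = k}. pat_prob R C S P * B (pattern_rank R C P))" .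
  qed
  also have "\<dots> = (\<Sum>P\<in>Pow (box R C). pat_prob R C S P * B (pattern_rank R C P))"
    by (rule sum.group[OF fin]) (auto simp: pattern_rank_le)
  finally show ?thesis by simp
qed

lemma ps_last:
  "pat_space n L L = (\<lambda>P m. if m = L then P else {}) ` Pow (box (n L) (n (L - 1)))"
proof (intro equalityI subsetI)
  fix pat assume a: "pat \<in> pat_space n L L"
  then have "pat = (\<lambda>m. if m = L then pat L else {})" unfolding pat_space_def by (auto simp: fun_eq_iff)
  moreover have "pat L \<in> Pow (box (n L) (n (L - 1)))" using a unfolding pat_space_def by auto
  ultimately show "pat \<in> (\<lambda>P m. if m = L then P else {}) ` Pow (box (n L) (n (L - 1)))" by blast
next
  fix pat assume "pat \<in> (\<lambda>P m. if m = L then P else {}) ` Pow (box (n L) (n (L - 1)))"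
  then show "pat \<in> pat_space n L L" unfolding pat_space_def by auto
qed

lemma inj_last: "inj_on (\<lambda>P m. if m = L then P else {}) X"
proof (rule inj_onI)
  fix P Q assume "P \<in> X" "Q \<in> X" and eq: "(\<lambda>m. if m = L then P else {}) = (\<lambda>m. if m = L then Q else {})"
  show "P = Q" using fun_cong[OF eq, of L] by simp
qed

lemma ps_step:
  assumes "l < L"
  shows "pat_space n L l = (\<lambda>(P, r). r(l := P)) ` (Pow (box (n l) (n (l - 1))) \<times> pat_space n L (Suc l))"
proof (intro equalityI subsetI)
  fix pat assume a: "pat \<in> pat_space n L l"
  have "pat(l := {}) \<in> pat_space n L (Suc l)" using a assms unfolding pat_space_def by auto
  moreover have "pat l \<in> Pow (box (n l) (n (l - 1)))" using a assms unfolding pat_space_def by auto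
  moreover have "pat = (pat(l := {}))(l := pat l)" by simp
  ultimately show "pat \<in> (\<lambda>(P, r). r(l := P)) ` (Pow (box (n l) (n (l - 1))) \<times> pat_space n L (Suc l))"
    by (intro image_eqI[of _ _ "(pat l, pat(l := {}))"]) auto
next
  fix pat assume "pat \<in> (\<lambda>(P, r). r(l := P)) ` (Pow (box (n l) (n (l - 1))) \<times> pat_space n L (Suc l))"
  then obtain P r where "P \<in> Pow (box (n l) (n (l - 1)))" "r \<in> pat_space n L (Suc l)" "pat = r(l := P)" by auto
  then show "pat \<in> pat_space n L l" using assms unfolding pat_space_def by auto
qed

lemma inj_step: "inj_on (\<lambda>(P, r). r(l := P)) (X \<times> pat_space n L (Suc l))"
proof (rule inj_onI)
  fix x y assume x: "x \<in> X \<times> pat_space n L (Suc l)" and y: "y \<in> X \<times> pat_space n L (Suc l)"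
    and e: "(\<lambda>(P, r). r(l := P)) x = (\<lambda>(P, r). r(l := P)) y"
  obtain P1 r1 where 1: "x = (P1, r1)" by (cases x)
  obtain P2 r2 where 2: "y = (P2, r2)" by (cases y)
  have r1l: "r1 l = {}" "r2 l = {}" using x y 1 2 unfolding pat_space_def by auto
  have e': "r1(l := P1) = r2(l := P2)" using e 1 2 by simp
  then have "P1 = P2" by (metis fun_upd_same)
  moreover have "r1 = r2"
  proof (rule ext)
    fix m show "r1 m = r2 m"
      using fun_cong[OF e', of m] r1l by (cases "m = l") auto
  qed
  ultimately show "x = y" using 1 2 by simp
qed

lemma supported_upd:
  "supported n L (Suc l) (pat(l := P)) W = supported n L (Suc l) pat W"
  unfolding supported_def by auto

lemma MR_upd:
  "max_regions n L (pat(l := P)) (Suc l) d = max_regions n L pat (Suc l) d"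
  unfolding max_regions_def supported_upd ..

lemma sum_rearr:
  fixes a :: real
  shows "(\<Sum>r\<in>R. a * w r * (\<Sum>j\<in>J. c j * M r j)) = a * (\<Sum>j\<in>J. c j * (\<Sum>r\<in>R. w r * M r j))"
proof -
  have "(\<Sum>r\<in>R. a * w r * (\<Sum>j\<in>J. c j * M r j)) = (\<Sum>r\<in>R. \<Sum>j\<in>J. a * (c j * (w r * M r j)))"
    by (simp add: sum_distrib_left mult_ac)
  also have "\<dots> = (\<Sum>j\<in>J. \<Sum>r\<in>R. a * (c j * (w r * M r j)))" by (rule sum.swap)
  also have "\<dots> = a * (\<Sum>j\<in>J. c j * (\<Sum>r\<in>R. w r * M r j))" by (simp add: sum_distrib_left)
  finally show ?thesis .
qed

lemma Rexp_last:
  assumes p: "0 \<le> p L" "p L \<le> 1"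
  shows "Rexp n L p L d \<le> (\<Sum>k = 0..n L. prob_rank k (n L) (n (L - 1)) (p L) *
              (\<Sum>j = 0..min k d. real (n L choose j)))"
proof -
  let ?e = "\<lambda>P m. if m = L then P else ({}::(nat \<times> nat) set)"
  let ?B = "\<lambda>k. (\<Sum>j = 0..min k d. real (n L choose j))"
  have "Rexp n L p L d = (\<Sum>P\<in>Pow (box (n L) (n (L - 1))).
        (\<Prod>m\<in>{L..L}. pat_prob (n m) (n (m - 1)) (p m) (?e P m)) * max_regions n L (?e P) L d)"
    unfolding Rexp_def ps_last by (subst sum.reindex[OF inj_last]) simp
  also have "\<dots> = (\<Sum>P\<in>Pow (box (n L) (n (L - 1))). pat_prob (n L) (n (L - 1)) (p L) P * max_regions n L (?e P) L d)"
    by simp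
  also have "\<dots> \<le> (\<Sum>P\<in>Pow (box (n L) (n (L - 1))). pat_prob (n L) (n (L - 1)) (p L) P * ?B (pattern_rank (n L) (n (L - 1)) P))"
  proof (rule sum_mono, rule mult_left_mono)
    fix P
    show "max_regions n L (?e P) L d \<le> ?B (pattern_rank (n L) (n (L - 1)) P)"
      using K1[of n L "?e P" d] by simp
    show "0 \<le> pat_prob (n L) (n (L - 1)) (p L) P" by (rule pat_prob_nonneg[OF p])
  qed
  also have "\<dots> = (\<Sum>k = 0..n L. prob_rank k (n L) (n (L - 1)) (p L) * ?B k)"
    by (rule group_rank)
  finally show ?thesis .
qed

lemma Rexp_step:
  assumes lL: "l < L" and l1: "1 \<le> l"
    and p: "\<And>m. 1 \<le> m \<Longrightarrow> m \<le> L \<Longrightarrow> 0 \<le> p m \<and> p m \<le> 1"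
  shows "Rexp n L p l d \<le>
           (\<Sum>k = 0..n l. prob_rank k (n l) (n (l - 1)) (p l) *
              (\<Sum>j = 0..min k d. real (n l choose j) *
                 Rexp n L p (l + 1) (min (n l - j) (min d k))))"
proof -
  let ?Bx = "Pow (box (n l) (n (l - 1)))"
  let ?PS = "pat_space n L (Suc l)"
  let ?pp = "\<lambda>m P. pat_prob (n m) (n (m - 1)) (p m) P"
  let ?w = "\<lambda>r. \<Prod>m\<in>{Suc l..L}. ?pp m (r m)"
  let ?rk = "\<lambda>P. pattern_rank (n l) (n (l - 1)) P"
  let ?c = "\<lambda>j. real (n l choose j)"
  let ?mm = "\<lambda>P j. min (n l - j) (min d (?rk P))"
  let ?B = "\<lambda>k. (\<Sum>j = 0..min k d. real (n l choose j) * Rexp n L p (l + 1) (min (n l - j) (min d k)))"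
  have prodsplit: "(\<Prod>m\<in>{l..L}. ?pp m ((r(l := P)) m)) = ?pp l P * ?w r" for r P
  proof -
    have "{l..L} = insert l {Suc l..L}" using lL by auto
    then have "(\<Prod>m\<in>{l..L}. ?pp m ((r(l := P)) m)) = ?pp l P * (\<Prod>m\<in>{Suc l..L}. ?pp m ((r(l := P)) m))"
      by simp
    also have "(\<Prod>m\<in>{Suc l..L}. ?pp m ((r(l := P)) m)) = ?w r" by (rule prod.cong) auto
    finally show ?thesis .
  qed
  have wnn: "0 \<le> ?w r" for r
    by (rule prod_nonneg) (use p l1 in \<open>auto intro!: pat_prob_nonneg\<close>)
  have ppnn: "0 \<le> ?pp l P" for P by (rule pat_prob_nonneg) (use p l1 lL in auto)
  have "Rexp n L p l d = (\<Sum>x\<in>?Bx \<times> ?PS. (\<Prod>m\<in>{l..L}. ?pp m ((case x of (P, r) \<Rightarrow> r(l := P)) m)) * max_regions n L (case x of (P, r) \<Rightarrow> r(l := P)) l d)"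
    unfolding Rexp_def ps_step[OF lL] by (simp only: sum.reindex[OF inj_step] o_def)
  also have "\<dots> = (\<Sum>(P, r)\<in>?Bx \<times> ?PS. ?pp l P * ?w r * max_regions n L (r(l := P)) l d)"
  proof (rule sum.cong[OF refl])
    fix x assume "x \<in> ?Bx \<times> ?PS"
    obtain P r where x: "x = (P, r)" by (cases x)
    show "(\<Prod>m\<in>{l..L}. ?pp m ((case x of (P, r) \<Rightarrow> r(l := P)) m)) * max_regions n L (case x of (P, r) \<Rightarrow> r(l := P)) l d
        = (case x of (P, r) \<Rightarrow> ?pp l P * ?w r * max_regions n L (r(l := P)) l d)"
      unfolding x case_prod_conv prodsplit ..
  qed
  also have "\<dots> \<le> (\<Sum>(P, r)\<in>?Bx \<times> ?PS. ?pp l P * ?w r * (\<Sum>j = 0..min (?rk P) d. ?c j * max_regions n L r (Suc l) (?mm P j)))"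
  proof (rule sum_mono)
    fix x assume "x \<in> ?Bx \<times> ?PS"
    obtain P r where x: "x = (P, r)" by (cases x)
    have "max_regions n L (r(l := P)) l d \<le> (\<Sum>j = 0..min (?rk P) d. ?c j * max_regions n L (r(l := P)) (Suc l) (?mm P j))"
      using K2[OF lL, of n "r(l := P)" d] by simp
    also have "\<dots> = (\<Sum>j = 0..min (?rk P) d. ?c j * max_regions n L r (Suc l) (?mm P j))"
      by (simp only: MR_upd)
    finally have "?pp l P * ?w r * max_regions n L (r(l := P)) l d \<le> ?pp l P * ?w r * (\<Sum>j = 0..min (?rk P) d. ?c j * max_regions n L r (Suc l) (?mm P j))"
      by (rule mult_left_mono) (use ppnn wnn in simp)
    then show "(case x of (P, r) \<Rightarrow> ?pp l P * ?w r * max_regions n L (r(l := P)) l d) \<le>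
          (case x of (P, r) \<Rightarrow> ?pp l P * ?w r * (\<Sum>j = 0..min (?rk P) d. ?c j * max_regions n L r (Suc l) (?mm P j)))"
      unfolding x by simp
  qed
  also have "\<dots> = (\<Sum>P\<in>?Bx. \<Sum>r\<in>?PS. ?pp l P * ?w r * (\<Sum>j = 0..min (?rk P) d. ?c j * max_regions n L r (Suc l) (?mm P j)))"
    by (rule sum.cartesian_product[symmetric])
  also have "\<dots> = (\<Sum>P\<in>?Bx. ?pp l P * (\<Sum>j = 0..min (?rk P) d. ?c j * (\<Sum>r\<in>?PS. ?w r * max_regions n L r (Suc l) (?mm P j))))"
    by (rule sum.cong[OF refl]) (rule sum_rearr)
  also have "\<dots> = (\<Sum>P\<in>?Bx. ?pp l P * ?B (?rk P))"
    unfolding Rexp_def by simp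
  also have "\<dots> = (\<Sum>k = 0..n l. prob_rank k (n l) (n (l - 1)) (p l) * ?B k)"
    by (rule group_rank)
  finally show ?thesis .
qed

theorem theorem1:
  fixes L :: nat and n :: "nat \<Rightarrow> nat" and p :: "nat \<Rightarrow> real"
  assumes "L \<ge> 1"
    and "\<And>l. 1 \<le> l \<Longrightarrow> l \<le> L \<Longrightarrow> 0 \<le> p l \<and> p l \<le> 1"
  shows "\<forall>d. Rexp n L p L d \<le>
           (\<Sum>k = 0..n L. prob_rank k (n L) (n (L - 1)) (p L) *
              (\<Sum>j = 0..min k d. real (n L choose j)))
       \<and> (\<forall>l d. 1 \<le> l \<and> l \<le> L - 1 \<longrightarrow>
           Rexp n L p l d \<le>
           (\<Sum>k = 0..n l. prob_rank k (n l) (n (l - 1)) (p l) *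
              (\<Sum>j = 0..min k d. real (n l choose j) *
                 Rexp n L p (l + 1) (min (n l - j) (min d k)))))"
proof (intro conjI allI impI)
  fix d
  have "0 \<le> p L" "p L \<le> 1" using assms by auto
  then show "Rexp n L p L d \<le> (\<Sum>k = 0..n L. prob_rank k (n L) (n (L - 1)) (p L) *
              (\<Sum>j = 0..min k d. real (n L choose j)))"
    by (rule Rexp_last)
next
  fix l d assume a: "1 \<le> l \<and> l \<le> L - 1"
  then have "l < L" "1 \<le> l" using assms(1) by auto
  then show "Rexp n L p l d \<le>
           (\<Sum>k = 0..n l. prob_rank k (n l) (n (l - 1)) (p l) *
              (\<Sum>j = 0..min k d. real (n l choose j) *
                 Rexp n L p (l + 1) (min (n l - j) (min d k))))"
    using Rexp_step assms(2) by blast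
qed

end
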